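(* Consider the $k$-means++ seeding algorithm run for $k+\Delta$ steps on a finite set $\mathbf{X}\subset\mathbb{R}^d$ with a fixed optimal $k$-clustering $\mathcal{P}=\{P_1,\dots,P_k\}$. For any cluster $P\in\mathcal{P}$ and any $t\le k+\Delta$ such that $\Delta-M(C_t)\ge2$, $$\mathbb{E}\big[U(P,C_{k+\Delta})\mid C_t\big]\le\frac{\widetilde H_t(\mathbf{X})}{e\,(\Delta-M(C_t)-1)}.$$
   Context: For a finite $C\subset\mathbb{R}^d$, $\mathrm{cost}(x,C)=\min_{c\in C}\|x-c\|^2$, $\mathrm{cost}(\mathbf{Y},C)=\sum_{x\in\mathbf{Y}}\mathrm{cost}(x,C)$, $\mathrm{OPT}_i(\mathbf{Y})=\min_{|C|=i}\mathrm{cost}(\mathbf{Y},C)$. $k$-means++ seeding: $c_1$ uniform from $\mathbf{X}$, $C_1=\{c_1\}$; $C_{t+1}=C_t\cup\{x\}$ with $x$ chosen with probability $\mathrm{cost}(x,C_t)/\mathrm{cost}(\mathbf{X},C_t)$; centers are ordered by the time they are chosen. $P_1,\dots,P_k$ is a fixed optimal $k$-means clustering of $\mathbf{X}$. $P_i$ is covered by $C$ if $C\cap P_i\ne\varnothing$. $U(P_i,C)=\mathrm{cost}(P_i,C)$ if $P_i$ is not covered by $C$ and $0$ otherwise. A center $c\in C$ is a miss if an earlier center of $C$ lies in the same cluster $P_i$ as $c$; $M(C)$ is the number of misses. $\widetilde H_t(P_i)=\mathrm{cost}(P_i,C_{t_i})$ if $P_i$ is covered by $C_t$, where $t_i\le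 t$ is the first time $P_i$ is covered, and $\widetilde H_t(P_i)=5\,\mathrm{OPT}_1(P_i)$ otherwise; $\widetilde H_t(\mathbf{X})=\sum_i\widetilde H_t(P_i)$. *)

theory Defs
  imports "HOL-Analysis.Analysis" "HOL-Probability.Probability_Mass_Function"
begin

definition cost_pt :: "'a::euclidean_space \<Rightarrow> 'a set \<Rightarrow> real" where
  "cost_pt x C = Min ((\<lambda>c. (norm (x - c))^2) ` C)"

definition cost_set :: "'a::euclidean_space set \<Rightarrow> 'a set \<Rightarrow> real" where
  "cost_set Y C = (\<Sum>x\<in>Y. cost_pt x C)"

definition OPT :: "nat \<Rightarrow> 'a::euclidean_space set \<Rightarrow> real" where
  "OPT i Y = Inf {cost_set Y C | C. finite C \<and> card C = i}"

definition optimal_clustering :: "'a::euclidean_space set \<Rightarrow> nat \<Rightarrow> (nat \<Rightarrow> 'a set) \<Rightarrow> bool" where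
  "optimal_clustering X k P \<longleftrightarrow>
     (\<Union>i<k. P i) = X \<and> (\<forall>i<k. \<forall>j<k. i \<noteq> j \<longrightarrow> P i \<inter> P j = {}) \<and>
     (\<Sum>i<k. OPT 1 (P i)) = OPT k X"

definition d2_pmf :: "'a::euclidean_space set \<Rightarrow> 'a set \<Rightarrow> 'a pmf" where
  "d2_pmf X C = embed_pmf (\<lambda>x. if x \<in> X then cost_pt x C / cost_set X C else 0)"

text \<open>One step of k-means++ seeding; centres are kept as a list in the order chosen.
  (If all points have cost 0, the choice is uniform; this is a convention only.)\<close>
definition kpp_step :: "'a::euclidean_space set \<Rightarrow> 'a list \<Rightarrow> 'a list pmf" where
  "kpp_step X cs =
     (if cs = [] then map_pmf (\<lambda>x. [x]) (pmf_of_set X)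
      else if cost_set X (set cs) = 0 then map_pmf (\<lambda>x. cs @ [x]) (pmf_of_set X)
      else map_pmf (\<lambda>x. cs @ [x]) (d2_pmf X (set cs)))"

primrec kpp_run :: "'a::euclidean_space set \<Rightarrow> nat \<Rightarrow> 'a list \<Rightarrow> 'a list pmf" where
  "kpp_run X 0 cs = return_pmf cs"
| "kpp_run X (Suc n) cs = kpp_run X n cs \<bind> kpp_step X"

definition U :: "'a::euclidean_space set \<Rightarrow> 'a set \<Rightarrow> real" where
  "U Q C = (if Q \<inter> C = {} then cost_set Q C else 0)"

definition misses :: "nat \<Rightarrow> (nat \<Rightarrow> 'a set) \<Rightarrow> 'a list \<Rightarrow> nat" where
  "misses k P cs = card {j. j < length cs \<and>
      (\<exists>j'<j. \<exists>i<k. cs ! j' \<in> P i \<and> cs ! j \<in> P i)}"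

definition Htilde_cl :: "'a::euclidean_space set \<Rightarrow> 'a list \<Rightarrow> real" where
  "Htilde_cl Q cs =
     (if Q \<inter> set cs \<noteq> {}
      then cost_set Q (set (take (LEAST s. Q \<inter> set (take s cs) \<noteq> {}) cs))
      else 5 * OPT 1 Q)"

definition Htilde :: "nat \<Rightarrow> (nat \<Rightarrow> 'a::euclidean_space set) \<Rightarrow> 'a list \<Rightarrow> real" where
  "Htilde k P cs = (\<Sum>i<k. Htilde_cl (P i) cs)"

end

theory Submission
  imports Defs
begin


lemma cost_pt_le: "finite C \<Longrightarrow> c \<in> C \<Longrightarrow> cost_pt x C \<le> (norm (x - c))^2"
  unfolding cost_pt_def by (rule Min_le) auto

lemma cost_pt_ex: "finite C \<Longrightarrow> C \<noteq> {} \<Longrightarrow> \<exists>c\<in>C. cost_pt x C = (norm (x - c))^2"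
proof -
  assume "finite C" "C \<noteq> {}"
  then have "cost_pt x C \<in> (\<lambda>c. (norm (x - c))^2) ` C" unfolding cost_pt_def by (intro Min_in) auto
  then show ?thesis by auto
qed

lemma cost_pt_nonneg: "finite C \<Longrightarrow> C \<noteq> {} \<Longrightarrow> 0 \<le> cost_pt x C"
  using cost_pt_ex[of C x] by auto

lemma cost_pt_zero_iff: "finite C \<Longrightarrow> C \<noteq> {} \<Longrightarrow> cost_pt x C = 0 \<longleftrightarrow> x \<in> C"
proof
  assume "finite C" "C \<noteq> {}" "cost_pt x C = 0"
  then obtain c where "c \<in> C" "(norm (x - c))^2 = 0" using cost_pt_ex[of C x] by auto
  then show "x \<in> C" by simp
next
  assume "finite C" "C \<noteq> {}" "x \<in> C"
  then show "cost_pt x C = 0" using cost_pt_le[of C x x] cost_pt_nonneg[of C x] by simp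
qed

lemma cost_pt_mono: "finite D \<Longrightarrow> C \<subseteq> D \<Longrightarrow> C \<noteq> {} \<Longrightarrow> cost_pt x D \<le> cost_pt x C"
proof -
  assume a: "finite D" "C \<subseteq> D" "C \<noteq> {}"
  then have "finite C" using finite_subset by blast
  then obtain c where "c \<in> C" "cost_pt x C = (norm (x - c))^2" using cost_pt_ex[of C x] a by auto
  then show ?thesis using cost_pt_le[of D c x] a by auto
qed

lemma cost_pt_single: "cost_pt x {c} = (norm (x - c))^2"
  unfolding cost_pt_def by simp

lemma cost_pt_lip:
  assumes "finite C" "C \<noteq> {}"
  shows "cost_pt c C \<le> 2 * cost_pt y C + 2 * (norm (y - c))^2"
proof -
  obtain d where d: "d \<in> C" "cost_pt y C = (norm (y - d))^2" using cost_pt_ex[OF assms, of y] by auto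
  have "cost_pt c C \<le> (norm (c - d))^2" by (rule cost_pt_le[OF assms(1) d(1)])
  also have "\<dots> \<le> (norm (y - c) + norm (y - d))^2"
  proof -
    have "norm (c - d) \<le> norm (y - c) + norm (y - d)"
      using norm_triangle_ineq[of "c - y" "y - d"] by (simp add: norm_minus_commute)
    then show ?thesis by (intro power_mono) auto
  qed
  also have "\<dots> \<le> 2 * (norm (y - d))^2 + 2 * (norm (y - c))^2"
    using sum_squares_ge_zero[of "norm (y - c) - norm (y - d)" 0]
    by (simp add: power2_eq_square algebra_simps)
  finally show ?thesis using d by simp
qed

lemma cost_set_nonneg: "finite C \<Longrightarrow> C \<noteq> {} \<Longrightarrow> 0 \<le> cost_set Y C"
  unfolding cost_set_def by (intro sum_nonneg cost_pt_nonneg)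

lemma cost_set_mono: "finite D \<Longrightarrow> C \<subseteq> D \<Longrightarrow> C \<noteq> {} \<Longrightarrow> cost_set Y D \<le> cost_set Y C"
  unfolding cost_set_def by (intro sum_mono cost_pt_mono)

lemma cost_set_single: "cost_set Y {c} = (\<Sum>x\<in>Y. (norm (x - c))^2)"
  unfolding cost_set_def cost_pt_single ..

lemma OPT1_set_bdd: "bdd_below {cost_set Q C | C. finite C \<and> card C = 1}"
  by (rule bdd_belowI[of _ 0]) (auto intro: cost_set_nonneg)

lemma OPT1_le: "OPT 1 Q \<le> cost_set Q {c}"
  unfolding OPT_def by (rule cInf_lower[OF _ OPT1_set_bdd]) (auto intro!: exI[of _ "{c}"])

lemma OPT1_nonneg: "0 \<le> OPT 1 (Q :: 'a::euclidean_space set)"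
  unfolding OPT_def
proof (rule cInf_greatest)
  show "{cost_set Q C |C. finite C \<and> card C = 1} \<noteq> {}" by (auto intro!: exI[of _ "{0::'a}"])
next
  fix v assume "v \<in> {cost_set Q C |C. finite C \<and> card C = 1}"
  then show "0 \<le> v" by (auto intro: cost_set_nonneg)
qed

lemma parallel_axis:
  fixes Q :: "'a::euclidean_space set"
  assumes "finite Q" "Q \<noteq> {}"
  defines "mu \<equiv> (1 / real (card Q)) *\<^sub>R (\<Sum>x\<in>Q. x)"
  shows "(\<Sum>x\<in>Q. (norm (x - c))^2) = (\<Sum>x\<in>Q. (norm (x - mu))^2) + real (card Q) * (norm (c - mu))^2"
proof -
  have N: "real (card Q) > 0" using assms by (simp add: card_gt_0_iff)
  have s0: "(\<Sum>x\<in>Q. x - mu) = 0"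
  proof -
    have "(\<Sum>x\<in>Q. x - mu) = (\<Sum>x\<in>Q. x) - real (card Q) *\<^sub>R mu" by (simp add: sum_subtractf sum_constant_scaleR)
    also have "\<dots> = 0" unfolding mu_def using N by simp
    finally show ?thesis .
  qed
  have pt: "(norm (x - c))^2 = (norm (x - mu))^2 + 2 * inner (x - mu) (mu - c) + (norm (c - mu))^2" for x
  proof -
    have "x - c = (x - mu) + (mu - c)" by simp
    then have "(norm (x - c))^2 = inner ((x - mu) + (mu - c)) ((x - mu) + (mu - c))"
      by (simp only: power2_norm_eq_inner)
    also have "\<dots> = inner (x - mu) (x - mu) + 2 * inner (x - mu) (mu - c) + inner (mu - c) (mu - c)"
    proof -
      have g: "\<And>a b::'a. inner (a + b) (a + b) = inner a a + 2 * inner a b + inner b b"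
        by (simp add: inner_add_left inner_add_right inner_commute)
      show ?thesis by (rule g)
    qed
    also have "\<dots> = (norm (x - mu))^2 + 2 * inner (x - mu) (mu - c) + (norm (c - mu))^2"
      by (simp add: power2_norm_eq_inner[symmetric] norm_minus_commute)
    finally show ?thesis .
  qed
  have "(\<Sum>x\<in>Q. inner (x - mu) (mu - c)) = inner (\<Sum>x\<in>Q. x - mu) (mu - c)" by (simp add: inner_sum_left)
  also have "\<dots> = 0" using s0 by simp
  finally have z: "(\<Sum>x\<in>Q. inner (x - mu) (mu - c)) = 0" .
  have "(\<Sum>x\<in>Q. (norm (x - c))^2) = (\<Sum>x\<in>Q. (norm (x - mu))^2) + 2 * (\<Sum>x\<in>Q. inner (x - mu) (mu - c)) + (\<Sum>x\<in>Q. (norm (c - mu))^2)"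
    unfolding pt by (simp add: sum.distrib sum_distrib_left)
  then show ?thesis using z by simp
qed

lemma sum_single_le_2OPT:
  fixes Q :: "'a::euclidean_space set"
  assumes "finite Q" "Q \<noteq> {}"
  shows "(\<Sum>c\<in>Q. cost_set Q {c}) \<le> 2 * real (card Q) * OPT 1 Q"
proof -
  define mu where "mu = (1 / real (card Q)) *\<^sub>R (\<Sum>x\<in>Q. x)"
  define V where "V = (\<Sum>x\<in>Q. (norm (x - mu))^2)"
  have pa: "cost_set Q {c} = V + real (card Q) * (norm (c - mu))^2" for c
    unfolding cost_set_single V_def mu_def by (rule parallel_axis[OF assms])
  have VO: "V \<le> OPT 1 Q"
    unfolding OPT_def
  proof (rule cInf_greatest)
    show "{cost_set Q C |C. finite C \<and> card C = 1} \<noteq> {}" by (auto intro!: exI[of _ "{0::'a}"])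
  next
    fix v assume "v \<in> {cost_set Q C |C. finite C \<and> card C = 1}"
    then obtain C where "v = cost_set Q C" "card C = 1" by auto
    then obtain c where "C = {c}" by (auto simp: card_Suc_eq)
    then show "V \<le> v" using pa[of c] \<open>v = cost_set Q C\<close> by simp
  qed
  have "(\<Sum>c\<in>Q. cost_set Q {c}) = real (card Q) * V + real (card Q) * V"
    unfolding pa by (simp add: sum.distrib sum_distrib_left[symmetric] V_def norm_minus_commute)
  also have "\<dots> \<le> 2 * real (card Q) * OPT 1 Q" using mult_left_mono[OF VO, of "real (card Q)"] by (simp add: mult.commute)
  finally show ?thesis .
qed

lemma per_c:
  fixes a w A S Ob N :: real
  assumes N: "N > 0" and a: "a \<ge> 0" and wA: "w \<le> A" and wS: "w \<le> S" and aN: "N * a \<le> 2 * A + 2 * S"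
    and SO: "Ob \<le> S" and Ob: "Ob \<ge> 0" and A: "A \<ge> 0"
  shows "a * w \<le> a * Ob + 4 * A / N * (S - Ob)"
proof -
  have main: "N * (a * w) \<le> N * (a * Ob) + 4 * A * (S - Ob)"
  proof (cases "w \<le> Ob")
    case True
    have "N * (a * w) \<le> N * (a * Ob)" using True a N by (simp add: mult_left_mono)
    moreover have "0 \<le> 4 * A * (S - Ob)" using A SO by simp
    ultimately show ?thesis by linarith
  next
    case False
    then have wO: "w - Ob \<ge> 0" by simp
    have "N * a * (w - Ob) \<le> (2 * A + 2 * S) * (w - Ob)" using mult_right_mono[OF aN wO] .
    also have "\<dots> \<le> 4 * A * (S - Ob)"
    proof (cases "S \<le> A")
      case True
      have "(2 * A + 2 * S) * (w - Ob) \<le> (4 * A) * (w - Ob)" using True wO by (intro mult_right_mono) auto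
      also have "\<dots> \<le> 4 * A * (S - Ob)" using wS A by (intro mult_left_mono) auto
      finally show ?thesis .
    next
      case False
      have "(2 * A + 2 * S) * (w - Ob) \<le> (4 * S) * (w - Ob)" using False wO by (intro mult_right_mono) auto
      also have "\<dots> \<le> 4 * S * (A - Ob)" using wA SO Ob by (intro mult_left_mono) auto
      also have "\<dots> \<le> 4 * A * (S - Ob)"
      proof -
        have "A * Ob \<le> S * Ob" using False Ob by (intro mult_right_mono) auto
        then show ?thesis by (simp add: algebra_simps)
      qed
      finally show ?thesis .
    qed
    finally have "N * a * (w - Ob) \<le> 4 * A * (S - Ob)" .
    then show ?thesis by (simp add: algebra_simps)
  qed
  have e: "N * (4 * A / N * (S - Ob)) = 4 * A * (S - Ob)" using N by simp
  have "N * (a * w) \<le> N * (a * Ob + 4 * A / N * (S - Ob))"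
    using main e by (simp add: distrib_left)
  then show ?thesis using N by (simp add: mult_le_cancel_left_pos)
qed

lemma five_lemma:
  fixes Q C :: "'a::euclidean_space set"
  assumes Q: "finite Q" "Q \<noteq> {}" and C: "finite C" "C \<noteq> {}"
  shows "(\<Sum>c\<in>Q. cost_pt c C * cost_set Q (insert c C)) \<le> 5 * OPT 1 Q * cost_set Q C"
proof -
  define A where "A = cost_set Q C"
  define Ob where "Ob = OPT 1 Q"
  define N where "N = real (card Q)"
  have Np: "N > 0" unfolding N_def using Q by (simp add: card_gt_0_iff)
  have A0: "A \<ge> 0" unfolding A_def using C by (rule cost_set_nonneg)
  have O0: "Ob \<ge> 0" unfolding Ob_def by (rule OPT1_nonneg)
  have per: "cost_pt c C * cost_set Q (insert c C) \<le> cost_pt c C * Ob + 4 * A / N * (cost_set Q {c} - Ob)"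
    if c: "c \<in> Q" for c
  proof (rule per_c[OF Np])
    show "cost_pt c C \<ge> 0" using C by (rule cost_pt_nonneg)
    show "cost_set Q (insert c C) \<le> A" unfolding A_def using C by (intro cost_set_mono) auto
    show "cost_set Q (insert c C) \<le> cost_set Q {c}" using C by (intro cost_set_mono) auto
    show "Ob \<le> cost_set Q {c}" unfolding Ob_def by (rule OPT1_le)
    show "Ob \<ge> 0" by (rule O0)
    show "A \<ge> 0" by (rule A0)
    have "N * cost_pt c C = (\<Sum>y\<in>Q. cost_pt c C)" unfolding N_def by simp
    also have "\<dots> \<le> (\<Sum>y\<in>Q. 2 * cost_pt y C + 2 * (norm (y - c))^2)"
      by (intro sum_mono cost_pt_lip[OF C])
    also have "\<dots> = 2 * A + 2 * cost_set Q {c}"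
      unfolding A_def cost_set_single by (simp add: sum.distrib sum_distrib_left cost_set_def)
    finally show "N * cost_pt c C \<le> 2 * A + 2 * cost_set Q {c}" .
  qed
  have "(\<Sum>c\<in>Q. cost_pt c C * cost_set Q (insert c C))
      \<le> (\<Sum>c\<in>Q. cost_pt c C * Ob + 4 * A / N * (cost_set Q {c} - Ob))"
    by (rule sum_mono) (rule per)
  also have "\<dots> = A * Ob + 4 * A / N * ((\<Sum>c\<in>Q. cost_set Q {c}) - N * Ob)"
  proof -
    have s1: "(\<Sum>c\<in>Q. cost_pt c C * Ob) = A * Ob" unfolding A_def cost_set_def by (simp add: sum_distrib_right)
    have s2: "(\<Sum>c\<in>Q. 4 * A / N * (cost_set Q {c} - Ob)) = 4 * A / N * ((\<Sum>c\<in>Q. cost_set Q {c}) - N * Ob)"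
    proof -
      have "(\<Sum>c\<in>Q. 4 * A / N * (cost_set Q {c} - Ob)) = 4 * A / N * (\<Sum>c\<in>Q. cost_set Q {c} - Ob)"
        by (rule sum_distrib_left[symmetric])
      also have "(\<Sum>c\<in>Q. cost_set Q {c} - Ob) = (\<Sum>c\<in>Q. cost_set Q {c}) - N * Ob"
        unfolding N_def by (simp add: sum_subtractf)
      finally show ?thesis .
    qed
    show ?thesis by (simp only: sum.distrib s1 s2)
  qed
  also have "\<dots> \<le> A * Ob + 4 * A / N * (2 * N * Ob - N * Ob)"
  proof -
    have "(\<Sum>c\<in>Q. cost_set Q {c}) \<le> 2 * N * Ob" unfolding N_def Ob_def by (rule sum_single_le_2OPT[OF Q])
    moreover have "4 * A / N \<ge> 0" using A0 Np by simp
    ultimately have "4 * A / N * ((\<Sum>c\<in>Q. cost_set Q {c}) - N * Ob) \<le> 4 * A / N * (2 * N * Ob - N * Ob)"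
      by (intro mult_left_mono) auto
    then show ?thesis by (rule add_left_mono)
  qed
  also have "\<dots> = 5 * Ob * A" using Np by (simp add: field_simps)
  finally show ?thesis unfolding Ob_def A_def .
qed


definition sl :: "nat \<Rightarrow> real" where
  "sl n = real (n - 1) ^ (n - 1) / real n ^ n"

definition psi :: "nat \<Rightarrow> real \<Rightarrow> real" where
  "psi n x = (if x \<le> real n - 1 then sl n * x else (x / (1 + x)) ^ n)"

lemma frac_cross: "(a::real) / x \<le> b / p \<Longrightarrow> 0 < x \<Longrightarrow> 0 < p \<Longrightarrow> a * p \<le> b * x"
  by (simp add: divide_le_eq le_divide_eq field_simps)

lemma K_ineq:
  fixes x :: real and j :: nat
  assumes "0 \<le> x"
  shows "real (j+1) ^ (j+1) * x ^ j \<le> real j ^ j * (1 + x) ^ (j+1)"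
proof (cases "j = 0")
  case True then show ?thesis using assms by simp
next
  case False
  show ?thesis
  proof (cases "x = 0")
    case True then show ?thesis using False by (simp add: power_0_left)
  next
    case False2: False
    have xp: "x > 0" using assms False2 by simp
    have jp: "real j > 0" using False by simp
    define t where "t = (real j - x) / ((real j + 1) * x)"
    have d: "(real j + 1) * x > 0" using xp by simp
    have jx: "0 \<le> real j * x" using xp jp by simp
    have "-((real j + 1) * x) \<le> real j - x" using jx jp by (simp add: algebra_simps)
    hence t1: "-1 \<le> t" unfolding t_def using d by (simp add: le_divide_eq)
    have B: "1 + real (j+1) * t \<le> (1 + t) ^ (j+1)" using Bernoulli_inequality[OF t1, of "j+1"] by (simp only: of_nat_add of_nat_1)
    have nz: "x + x * real j \<noteq> 0" "(real j + 1) * x \<noteq> 0" "x \<noteq> 0" using d xp by (auto simp: algebra_simps)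
    have e1: "1 + real (j+1) * t = real j / x" unfolding t_def using nz by (simp add: field_simps; simp add: algebra_simps)
    have e2: "1 + t = ((1 + x) * real j) / ((real j + 1) * x)" unfolding t_def using nz by (simp add: field_simps; simp add: algebra_simps)
    have "real j / x \<le> (((1 + x) * real j) / ((real j + 1) * x)) ^ (j+1)" using B e1 e2 by simp
    also have "\<dots> = ((1 + x) * real j) ^ (j+1) / ((real j + 1) * x) ^ (j+1)" by (simp add: power_divide)
    finally have f1: "real j / x \<le> ((1 + x) * real j) ^ (j+1) / ((real j + 1) * x) ^ (j+1)" .
    have Pp: "((real j + 1) * x) ^ (j+1) > 0" using d by simp
    have c1: "real j * ((real j + 1) * x) ^ (j+1) \<le> ((1 + x) * real j) ^ (j+1) * x"
      using frac_cross[OF f1 xp Pp] .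
    have eP: "((real j + 1) * x) ^ (j+1) = ((real j + 1) ^ (j+1) * x ^ j) * x"
      by (simp add: power_mult_distrib)
    have eQ: "((1 + x) * real j) ^ (j+1) = (real j ^ j * (1 + x) ^ (j+1)) * real j"
      by (simp add: power_mult_distrib)
    define A where "A = (real j + 1) ^ (j+1) * x ^ j"
    define B where "B = real j ^ j * (1 + x) ^ (j+1)"
    have "real j * (A * x) \<le> B * real j * x" using c1 unfolding eP eQ A_def B_def .
    hence "(real j * x) * A \<le> (real j * x) * B" by (simp add: algebra_simps)
    hence "A \<le> B" using xp jp by (simp add: mult_le_cancel_left_pos)
    hence "(real j + 1) ^ (j+1) * x ^ j \<le> real j ^ j * (1 + x) ^ (j+1)" unfolding A_def B_def .
    then show ?thesis by (simp add: add.commute)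
  qed
qed


lemma sl_pos: "n \<ge> 1 \<Longrightarrow> sl n > 0"
proof -
  assume n: "n \<ge> 1"
  have a: "real (n - 1) ^ (n - 1) > 0"
  proof (cases "n = 1")
    case True then show ?thesis by simp
  next
    case False then have "real (n - 1) > 0" using n by simp
    then show ?thesis by (rule zero_less_power)
  qed
  have b: "real n ^ n > 0" using n by simp
  show ?thesis unfolding sl_def using a b by (rule divide_pos_pos)
qed

lemma psi_junction: "n \<ge> 1 \<Longrightarrow> sl n * (real n - 1) = ((real n - 1) / (1 + (real n - 1))) ^ n"
proof -
  assume n: "n \<ge> 1"
  have e: "real n - 1 = real (n - 1)" using n by (simp add: of_nat_diff)
  have e2: "1 + real (n - 1) = real n" using n by (simp add: of_nat_diff)
  have s: "Suc (n - 1) = n" using n by simp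
  have "sl n * real (n-1) = real (n-1) ^ (n-1) * real (n-1) / real n ^ n" unfolding sl_def by simp
  also have "\<dots> = real (n-1) ^ Suc (n - 1) / real n ^ n" by (simp only: power_Suc2)
  also have "\<dots> = real (n-1) ^ n / real n ^ n" by (simp only: s)
  also have "\<dots> = (real (n-1) / real n) ^ n" by (simp only: power_divide)
  finally show ?thesis by (simp only: e e2)
qed

definition gd :: "nat \<Rightarrow> real \<Rightarrow> real" where
  "gd n x = real n * x ^ (n - 1) / (1 + x) ^ (n + 1)"

lemma curve_deriv:
  assumes "x > -1"
  shows "((\<lambda>x. (x / (1 + x)) ^ n) has_real_derivative gd n x) (at x)"
proof -
  have nz: "1 + x \<noteq> 0" using assms by simp
  have "((\<lambda>x. (x / (1 + x)) ^ n) has_real_derivative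
      real n * (x / (1 + x)) ^ (n - 1) * ((1 * (1 + x) - x * 1) / ((1 + x) * (1 + x)))) (at x)"
    using nz by (intro derivative_eq_intros refl) auto
  moreover have "real n * (x / (1 + x)) ^ (n - 1) * ((1 * (1 + x) - x * 1) / ((1 + x) * (1 + x))) = gd n x"
  proof (cases n)
    case 0 then show ?thesis by (simp add: gd_def)
  next
    case (Suc m)
    have p: "(1 + x) ^ (n + 1) = (1 + x) ^ m * ((1 + x) * (1 + x))" using Suc by (simp add: power_add)
    have "real n * (x / (1 + x)) ^ (n - 1) * ((1 * (1 + x) - x * 1) / ((1 + x) * (1 + x)))
        = real n * (x ^ m / (1 + x) ^ m) * (1 / ((1 + x) * (1 + x)))"
      using Suc by (simp add: power_divide)
    also have "\<dots> = real n * x ^ m / ((1 + x) ^ m * ((1 + x) * (1 + x)))" by simp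
    also have "\<dots> = gd n x" unfolding gd_def p using Suc by simp
    finally show ?thesis .
  qed
  ultimately show ?thesis by simp
qed

lemma gd_antimono:
  assumes "real n - 1 \<le> 2 * x" "x \<le> y" "x \<ge> 0"
  shows "gd n y \<le> gd n x"
proof -
  define h where "h x = x ^ (n - 1) / (1 + x) ^ (n + 1)" for x :: real
  have "h y \<le> h x"
  proof (rule DERIV_nonpos_imp_nonincreasing[OF assms(2)])
    fix z assume z: "x \<le> z" "z \<le> y"
    have zp: "z \<ge> 0" using z assms by simp
    have nz: "(1 + z) ^ (n + 1) \<noteq> 0" using zp by simp
    define D where "D = (real (n - 1) * z ^ (n - 1 - 1) * (1 + z) ^ (n + 1) - z ^ (n - 1) * (real (n + 1) * (1 + z) ^ n)) /
       ((1 + z) ^ (n + 1) * (1 + z) ^ (n + 1))"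
    have Dd: "(h has_real_derivative D) (at z)"
      unfolding h_def D_def using nz
      by (intro derivative_eq_intros refl) auto
    have num: "real (n - 1) * z ^ (n - 1 - 1) * (1 + z) ^ (n + 1) - z ^ (n - 1) * (real (n + 1) * (1 + z) ^ n) \<le> 0"
    proof (cases "n \<le> 1")
      case True
      then have "n = 0 \<or> n = 1" by auto
      then show ?thesis using zp by auto
    next
      case False
      then obtain m where m: "n = m + 2" by (metis add.commute le_add_diff_inverse not_less_eq_eq one_add_one plus_1_eq_Suc)
      have r1: "z ^ (n - 1) = z ^ m * z" using m by simp
      have r2: "(1 + z) ^ (n + 1) = (1 + z) ^ (m + 2) * (1 + z)" using m by simp
      have r3: "(1 + z) ^ n = (1 + z) ^ (m + 2)" using m by simp
      have r4: "z ^ (n - 1 - 1) = z ^ m" using m by simp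
      have r5: "real (n - 1) = real m + 1" "real (n + 1) = real m + 3" using m by simp_all
      have gen: "\<And>a b. (real m + 1) * a * (b * (1 + z)) - a * z * ((real m + 3) * b) = a * b * (real m + 1 - 2 * z)"
        by (simp add: algebra_simps)
      have "real (n - 1) * z ^ (n - 1 - 1) * (1 + z) ^ (n + 1) - z ^ (n - 1) * (real (n + 1) * (1 + z) ^ n)
          = z ^ m * (1 + z) ^ (m + 2) * (real m + 1 - 2 * z)"
        unfolding r1 r2 r3 r4 r5 using gen by simp
      also have "\<dots> \<le> 0"
      proof -
        have "real m + 1 - 2 * z \<le> 0" using assms(1) z m by simp
        moreover have "z ^ m * (1 + z) ^ (m + 2) \<ge> 0" using zp by simp
        ultimately show ?thesis by (simp add: mult_nonneg_nonpos)
      qed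
      finally show ?thesis .
    qed
    have "D \<le> 0" unfolding D_def using num by (intro divide_nonpos_nonneg) simp_all
    then show "\<exists>y. (h has_real_derivative y) (at z) \<and> y \<le> 0" using Dd by blast
  qed
  then have "real n * h y \<le> real n * h x" by (simp add: mult_left_mono)
  then show ?thesis unfolding gd_def h_def by simp
qed

lemma curve_le: "0 \<le> x \<Longrightarrow> (x / (1 + x)) ^ n \<le> sl (Suc n) * (1 + x)"
proof -
  assume x: "0 \<le> x"
  have K: "real (n+1) ^ (n+1) * x ^ n \<le> real n ^ n * (1 + x) ^ (n+1)" by (rule K_ineq[OF x])
  have p1: "real (n+1) ^ (n+1) > 0" by simp
  have p2: "(1 + x) ^ n > 0" using x by simp
  have "(x / (1 + x)) ^ n = x ^ n / (1 + x) ^ n" by (simp add: power_divide)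
  also have "\<dots> \<le> real n ^ n / real (n+1) ^ (n+1) * (1 + x)"
  proof -
    have "x ^ n * real (n+1) ^ (n+1) \<le> real n ^ n * (1 + x) ^ n * (1 + x)"
      using K by (simp add: algebra_simps)
    then show ?thesis using p1 p2 by (simp add: divide_le_eq le_divide_eq field_simps)
  qed
  also have "\<dots> = sl (Suc n) * (1 + x)" unfolding sl_def by simp
  finally show ?thesis .
qed

lemma psi_nonneg: "n \<ge> 1 \<Longrightarrow> 0 \<le> x \<Longrightarrow> 0 \<le> psi n x"
  unfolding psi_def using sl_pos[of n] by auto

lemma psi_le_sl:
  assumes n: "n \<ge> 1" and x: "0 \<le> x"
  shows "psi n x \<le> sl n * x"
proof (cases "x \<le> real n - 1")
  case True then show ?thesis by (simp add: psi_def)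
next
  case False
  then have xp: "x > 0" using n by simp
  have K: "real (n-1+1) ^ (n-1+1) * x ^ (n-1) \<le> real (n-1) ^ (n-1) * (1 + x) ^ (n-1+1)"
    by (rule K_ineq[OF x])
  have s: "n - 1 + 1 = n" using n by simp
  have K2: "real n ^ n * x ^ (n-1) \<le> real (n-1) ^ (n-1) * (1 + x) ^ n" using K unfolding s .
  have xx: "x ^ n = x ^ (n-1) * x" using n by (metis s power_add power_one_right)
  have "real n ^ n * x ^ n \<le> real (n-1) ^ (n-1) * (1 + x) ^ n * x"
    unfolding xx using mult_right_mono[OF K2, of x] xp by (simp add: algebra_simps)
  then have "x ^ n / (1 + x) ^ n \<le> real (n-1) ^ (n-1) / real n ^ n * x"
    using xp n by (simp add: divide_le_eq le_divide_eq field_simps)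
  then show ?thesis using False by (simp add: psi_def sl_def power_divide)
qed

lemma frac_mono: "0 \<le> a \<Longrightarrow> a \<le> b \<Longrightarrow> a / (1 + a) \<le> b / (1 + (b::real))"
  by (simp add: divide_le_eq le_divide_eq field_simps)

lemma psi_mono:
  assumes n: "n \<ge> 1" and x: "0 \<le> x" and xy: "x \<le> y"
  shows "psi n x \<le> psi n y"
proof -
  have slp: "sl n > 0" using sl_pos[OF n] .
  consider "y \<le> real n - 1" | "x > real n - 1" | "x \<le> real n - 1" "y > real n - 1" by linarith
  then show ?thesis
  proof cases
    case 1 then show ?thesis using xy slp by (simp add: psi_def mult_left_mono)
  next
    case 2 then show ?thesis using xy x
      by (simp add: psi_def) (intro power_mono frac_mono; simp)
  next
    case 3
    have "psi n x = sl n * x" using 3 by (simp add: psi_def)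
    also have "\<dots> \<le> sl n * (real n - 1)" using 3 slp by (simp add: mult_left_mono)
    also have "\<dots> = ((real n - 1) / (1 + (real n - 1))) ^ n" by (rule psi_junction[OF n])
    also have "\<dots> \<le> (y / (1 + y)) ^ n"
      using 3 n by (intro power_mono frac_mono) simp_all
    also have "\<dots> = psi n y" using 3 by (simp add: psi_def)
    finally show ?thesis .
  qed
qed

lemma aux_lin:
  fixes a b c x :: real
  assumes "a * c \<le> b * (c + 1)" "0 \<le> x" "x \<le> c" "0 \<le> b" "0 \<le> a"
  shows "a * x \<le> b * (1 + x)"
proof (cases "c = 0")
  case True then show ?thesis using assms by simp
next
  case False
  then have cp: "c > 0" using assms by simp
  have "a * c * x \<le> b * (c + 1) * x" using mult_right_mono[OF assms(1) assms(2)] .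
  also have "\<dots> = b * c * x + b * x" by (simp add: algebra_simps)
  also have "\<dots> \<le> b * c * x + b * c" using mult_left_mono[OF assms(3) assms(4)] by simp
  finally have "c * (a * x) \<le> c * (b * (1 + x))" by (simp add: algebra_simps)
  then show ?thesis using cp by (simp add: mult_le_cancel_left_pos)
qed

lemma psi_rec:
  assumes n: "n \<ge> 1" and x: "0 \<le> x"
  shows "x * psi n x \<le> psi (Suc n) x * (1 + x)"
proof (cases "x > real n")
  case True
  then have a: "psi (Suc n) x = (x / (1 + x)) ^ Suc n" by (simp add: psi_def)
  have b: "psi n x = (x / (1 + x)) ^ n" using True by (simp add: psi_def)
  have nz: "1 + x \<noteq> 0" using x by simp
  have "(x / (1 + x)) ^ Suc n * (1 + x) = (x / (1 + x)) ^ n * (x / (1 + x) * (1 + x))"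
    by (simp only: power_Suc mult_ac)
  also have "\<dots> = (x / (1 + x)) ^ n * x" using nz by simp
  finally show ?thesis unfolding a b by simp
next
  case False
  then have a: "psi (Suc n) x = sl (Suc n) * x" by (simp add: psi_def)
  have slp: "sl (Suc n) > 0" by (rule sl_pos) simp
  have key: "psi n x \<le> sl (Suc n) * (1 + x)"
  proof (cases "x \<le> real n - 1")
    case False
    then show ?thesis using curve_le[OF x, of n] by (simp add: psi_def)
  next
    case True
    have c0: "0 \<le> real n - 1" using n by simp
    have j: "sl n * (real n - 1) \<le> sl (Suc n) * ((real n - 1) + 1)"
      using curve_le[OF c0, of n] psi_junction[OF n] by (simp add: add.commute)
    have "sl n * x \<le> sl (Suc n) * (1 + x)"
      by (rule aux_lin[OF j x True]) (use slp sl_pos[OF n] in auto)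
    then show ?thesis using True by (simp add: psi_def)
  qed
  have "x * psi n x \<le> x * (sl (Suc n) * (1 + x))" using mult_left_mono[OF key x] .
  then show ?thesis unfolding a by (simp add: algebra_simps)
qed

lemma psi_1_rec: "0 \<le> x \<Longrightarrow> x \<le> psi 1 x * (1 + x)"
proof -
  assume x: "0 \<le> x"
  show ?thesis
  proof (cases "x = 0")
    case True then show ?thesis by (simp add: psi_def sl_def)
  next
    case False
    then have "x > 0" using x by simp
    then show ?thesis by (simp add: psi_def)
  qed
qed

lemma sl_bound:
  assumes n: "n \<ge> 2"
  shows "sl n * (exp 1 * (real n - 1)) \<le> 1"
proof -
  define j where "j = n - 1"
  have jp: "real j \<ge> 1" using n unfolding j_def by simp
  have nj: "n = j + 1" using n unfolding j_def by simp
  define r where "r = (real j + 1) / real j"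
  have rp: "r > 0" unfolding r_def using jp by simp
  have "ln (real j / (real j + 1)) \<le> real j / (real j + 1) - 1"
    by (rule ln_le_minus_one) (use jp in simp)
  also have "\<dots> = - 1 / (real j + 1)" using jp by (simp add: field_simps)
  finally have l1: "ln (real j / (real j + 1)) \<le> - 1 / (real j + 1)" .
  have "ln r = - ln (real j / (real j + 1))" unfolding r_def using jp by (simp add: ln_div)
  then have "ln r \<ge> 1 / (real j + 1)" using l1 by simp
  then have "(real j + 1) * ln r \<ge> 1" using jp by (simp add: field_simps)
  then have "exp 1 \<le> exp ((real j + 1) * ln r)" by simp
  also have "\<dots> = exp (real (j + 1) * ln r)" by (simp add: add.commute)
  also have "\<dots> = exp (ln r) ^ (j + 1)" by (rule exp_of_nat_mult)
  also have "\<dots> = r ^ (j + 1)" using rp by simp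
  finally have e: "exp 1 \<le> r ^ (j + 1)" .
  have "r ^ (j + 1) = (real j + 1) ^ (j + 1) / real j ^ (j + 1)" unfolding r_def by (simp add: power_divide)
  then have "exp 1 * real j ^ (j + 1) \<le> (real j + 1) ^ (j + 1)" using e jp by (simp add: le_divide_eq)
  then have "exp 1 * (real j ^ j * real j) \<le> (real j + 1) ^ (j + 1)" by (simp add: mult.commute)
  moreover have "sl n * (exp 1 * (real n - 1)) = exp 1 * (real j ^ j * real j) / (real j + 1) ^ (j + 1)"
    unfolding sl_def nj by (simp add: mult_ac add.commute)
  moreover have "(real j + 1) ^ (j + 1) > 0" using jp by simp
  ultimately show ?thesis by (simp add: divide_le_eq)
qed

definition psid :: "nat \<Rightarrow> real \<Rightarrow> real" where
  "psid n x = (if x \<le> real n - 1 then sl n else gd n x)"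

lemma gd_junction: "n \<ge> 1 \<Longrightarrow> gd n (real n - 1) = sl n"
proof -
  assume n: "n \<ge> 1"
  have e: "1 + (real n - 1) = real n" by simp
  have s: "n + 1 = Suc (Suc (n - 1))" using n by simp
  have e2: "real n - 1 = real (n - 1)" using n by (simp add: of_nat_diff)
  have np: "real n > 0" using n by simp
  have "gd n (real n - 1) = real n * real (n - 1) ^ (n - 1) / real n ^ (n + 1)"
    unfolding gd_def e e2 by simp
  also have "\<dots> = real n * real (n - 1) ^ (n - 1) / (real n * real n ^ n)"
    using n by (simp add: power_Suc[symmetric] del: power_Suc)
  also have "\<dots> = real (n - 1) ^ (n - 1) / real n ^ n" using np by simp
  finally show ?thesis unfolding sl_def .
qed

lemma psi_deriv:
  assumes n: "n \<ge> 1" and x: "0 \<le> x"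
  shows "(psi n has_real_derivative psid n x) (at x)"
proof -
  define S where "S = {..real n - 1}"
  define T where "T = {real n - 1<..}"
  have ST: "S \<union> T = UNIV" unfolding S_def T_def by auto
  have cl: "closure S \<inter> closure T = {real n - 1}" unfolding S_def T_def by auto
  have eq: "psi n = (\<lambda>x. if x \<in> S then sl n * x else (x / (1 + x)) ^ n)"
    unfolding S_def psi_def by (auto simp: fun_eq_iff)
  have "((\<lambda>x. if x \<in> S then sl n * x else (x / (1 + x)) ^ n) has_derivative
      (if x \<in> S then (\<lambda>h. sl n * h) else (\<lambda>h. gd n x * h))) (at x within (S \<union> T))"
  proof (rule has_derivative_If_within_closures[where f' = "\<lambda>x h. sl n * h" and g' = "\<lambda>x h. gd n x * h"])
    show "((\<lambda>x. sl n * x) has_derivative (\<lambda>h. sl n * h)) (at x within S \<union> (closure S \<inter> closure T))"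
      by (intro derivative_eq_intros) auto
  next
    assume xin: "x \<in> T \<union> (closure S \<inter> closure T)"
    then have "x \<ge> real n - 1" unfolding cl T_def by auto
    then have "x > -1" using n by simp
    from curve_deriv[OF this, of n]
    show "((\<lambda>x. (x / (1 + x)) ^ n) has_derivative (\<lambda>h. gd n x * h)) (at x within T \<union> (closure S \<inter> closure T))"
      unfolding has_field_derivative_def by (rule has_derivative_at_withinI)
  next
    assume "x \<in> closure S" "x \<in> closure T"
    then have "x = real n - 1" using cl by auto
    then show "sl n * x = (x / (1 + x)) ^ n" using psi_junction[OF n] by simp
  next
    assume "x \<in> closure S" "x \<in> closure T"
    then have "x = real n - 1" using cl by auto
    then show "(\<lambda>h. sl n * h) = (\<lambda>h. gd n x * h)" using gd_junction[OF n] by simp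
  next
    show "x \<in> S \<union> T" using ST by simp
  qed
  then have "(psi n has_derivative (\<lambda>h. psid n x * h)) (at x)"
    unfolding eq ST by (simp add: psid_def S_def if_distrib cong: if_cong)
  then show ?thesis unfolding has_field_derivative_def by simp
qed

lemma psid_antimono:
  assumes n: "n \<ge> 1" and x: "0 \<le> x" and xy: "x \<le> y"
  shows "psid n y \<le> psid n x"
proof -
  consider "y \<le> real n - 1" | "x > real n - 1" | "x \<le> real n - 1" "y > real n - 1" by linarith
  then show ?thesis
  proof cases
    case 1 then show ?thesis using xy by (simp add: psid_def)
  next
    case 2 then show ?thesis using xy x by (simp add: psid_def gd_antimono)
  next
    case 3
    have "gd n y \<le> gd n (real n - 1)" using 3 n by (intro gd_antimono) auto
    then show ?thesis using 3 gd_junction[OF n] by (simp add: psid_def)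
  qed
qed

lemma psi_concave: "n \<ge> 1 \<Longrightarrow> concave_on {0..} (psi n)"
proof -
  assume n: "n \<ge> 1"
  have "convex_on {0..} (\<lambda>x. - psi n x)"
  proof (rule convex_on_realI[where f' = "\<lambda>x. - psid n x"])
    show "connected {0::real..}" by simp
  next
    fix x :: real assume "x \<in> {0..}"
    then show "((\<lambda>x. - psi n x) has_real_derivative - psid n x) (at x)"
      using psi_deriv[OF n] by (auto intro: DERIV_minus)
  next
    fix x y :: real assume "x \<in> {0..}" "y \<in> {0..}" "x \<le> y"
    then show "- psid n x \<le> - psid n y" using psid_antimono[OF n] by auto
  qed
  then show ?thesis by (simp add: concave_on_def)
qed


lemma d2_pmf_pmf:
  assumes X: "finite X" and C: "finite C" "C \<noteq> {}" and T: "cost_set X C > 0"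
  shows "pmf (d2_pmf X C) x = (if x \<in> X then cost_pt x C / cost_set X C else 0)"
  unfolding d2_pmf_def
proof (rule pmf_embed_pmf)
  fix x show "0 \<le> (if x \<in> X then cost_pt x C / cost_set X C else 0)"
    using cost_pt_nonneg[OF C] T by auto
next
  have "(\<integral>\<^sup>+x. ennreal (if x \<in> X then cost_pt x C / cost_set X C else 0) \<partial>count_space UNIV)
      = (\<Sum>x\<in>X. ennreal (if x \<in> X then cost_pt x C / cost_set X C else 0))"
    by (rule nn_integral_count_space'[OF X]) auto
  also have "\<dots> = (\<Sum>x\<in>X. ennreal (cost_pt x C / cost_set X C))" by simp
  also have "\<dots> = ennreal (\<Sum>x\<in>X. cost_pt x C / cost_set X C)"
    using cost_pt_nonneg[OF C] T by (intro sum_ennreal) auto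
  also have "(\<Sum>x\<in>X. cost_pt x C / cost_set X C) = 1"
    using T by (simp add: sum_divide_distrib[symmetric] cost_set_def)
  finally show "(\<integral>\<^sup>+x. ennreal (if x \<in> X then cost_pt x C / cost_set X C else 0) \<partial>count_space UNIV) = 1"
    by simp
qed

lemma set_d2_pmf:
  assumes X: "finite X" and C: "finite C" "C \<noteq> {}" and T: "cost_set X C > 0"
  shows "set_pmf (d2_pmf X C) \<subseteq> X"
  using d2_pmf_pmf[OF assms] by (auto simp: set_pmf_eq split: if_splits)

lemma set_pmf_step:
  assumes X: "finite X" "X \<noteq> {}"
  shows "set_pmf (kpp_step X cs) \<subseteq> (\<lambda>x. cs @ [x]) ` X"
proof (cases "cs = []")
  case True then show ?thesis using X by (auto simp: kpp_step_def)
next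
  case False
  show ?thesis
  proof (cases "cost_set X (set cs) = 0")
    case True then show ?thesis using X False by (auto simp: kpp_step_def)
  next
    case F2: False
    have "cost_set X (set cs) \<ge> 0" using False by (intro cost_set_nonneg) auto
    then have T: "cost_set X (set cs) > 0" using F2 by simp
    have "set_pmf (d2_pmf X (set cs)) \<subseteq> X" using False by (intro set_d2_pmf[OF X(1) _ _ T]) auto
    then show ?thesis using False F2 by (auto simp: kpp_step_def)
  qed
qed

lemma run_support:
  assumes X: "finite X" "X \<noteq> {}"
  shows "ds \<in> set_pmf (kpp_run X n cs) \<Longrightarrow> \<exists>ys. ds = cs @ ys \<and> length ys = n \<and> set ys \<subseteq> X"
proof (induction n arbitrary: ds)
  case 0 then show ?case by simp
next
  case (Suc n)
  then obtain c' where c': "c' \<in> set_pmf (kpp_run X n cs)" "ds \<in> set_pmf (kpp_step X c')" by auto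
  obtain ys where ys: "c' = cs @ ys" "length ys = n" "set ys \<subseteq> X" using Suc.IH[OF c'(1)] by auto
  obtain x where x: "x \<in> X" "ds = c' @ [x]" using set_pmf_step[OF X, of c'] c'(2) by auto
  show ?case using ys x by (intro exI[of _ "ys @ [x]"]) auto
qed

lemma finite_run:
  assumes X: "finite X" "X \<noteq> {}"
  shows "finite (set_pmf (kpp_run X n cs))"
proof -
  have "set_pmf (kpp_run X n cs) \<subseteq> (\<lambda>ys. cs @ ys) ` {ys. set ys \<subseteq> X \<and> length ys = n}"
    using run_support[OF X] by blast
  moreover have "finite ((\<lambda>ys. cs @ ys) ` {ys. set ys \<subseteq> X \<and> length ys = n})"
    using finite_lists_length_eq[OF X(1)] by simp
  ultimately show ?thesis by (rule finite_subset)
qed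

lemma run_Suc_first: "kpp_run X (Suc n) cs = bind_pmf (kpp_step X cs) (kpp_run X n)"
proof (induction n)
  case 0 then show ?case by (simp add: bind_return_pmf bind_return_pmf')
next
  case (Suc n)
  have "kpp_run X (Suc (Suc n)) cs = bind_pmf (kpp_run X (Suc n) cs) (kpp_step X)" by simp
  also have "\<dots> = bind_pmf (bind_pmf (kpp_step X cs) (kpp_run X n)) (kpp_step X)" using Suc by simp
  also have "\<dots> = bind_pmf (kpp_step X cs) (\<lambda>c. bind_pmf (kpp_run X n c) (kpp_step X))" by (rule bind_assoc_pmf)
  also have "(\<lambda>c. bind_pmf (kpp_run X n c) (kpp_step X)) = kpp_run X (Suc n)" by (rule ext) simp
  finally show ?case by simp
qed

lemma exp_bind:
  fixes f :: "'b \<Rightarrow> real"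
  assumes A: "finite A" "set_pmf M \<subseteq> A" and N: "\<And>x. x \<in> A \<Longrightarrow> finite (set_pmf (N x))"
  shows "measure_pmf.expectation (bind_pmf M N) f = (\<Sum>x\<in>A. pmf M x * measure_pmf.expectation (N x) f)"
proof -
  define B where "B = (\<Union>x\<in>A. set_pmf (N x))"
  have B: "finite B" unfolding B_def using A N by auto
  have sb: "set_pmf (bind_pmf M N) \<subseteq> B" unfolding B_def using A by auto
  have "measure_pmf.expectation (bind_pmf M N) f = (\<Sum>a\<in>B. f a * pmf (bind_pmf M N) a)"
    using sb by (intro integral_measure_pmf_real[OF B]) auto
  also have "\<dots> = (\<Sum>a\<in>B. f a * (\<Sum>x\<in>A. pmf (N x) a * pmf M x))"
  proof (intro sum.cong refl)
    fix a
    have "pmf (bind_pmf M N) a = (\<integral>x. pmf (N x) a \<partial>measure_pmf M)" by (rule pmf_bind)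
    also have "\<dots> = (\<Sum>x\<in>A. pmf (N x) a * pmf M x)"
      using A by (intro integral_measure_pmf_real) auto
    finally show "f a * pmf (bind_pmf M N) a = f a * (\<Sum>x\<in>A. pmf (N x) a * pmf M x)" by simp
  qed
  also have "\<dots> = (\<Sum>x\<in>A. pmf M x * (\<Sum>a\<in>B. f a * pmf (N x) a))"
    by (simp add: sum_distrib_left sum_distrib_right mult_ac sum.swap[of _ B])
  also have "\<dots> = (\<Sum>x\<in>A. pmf M x * measure_pmf.expectation (N x) f)"
  proof (intro sum.cong refl)
    fix x assume x: "x \<in> A"
    have "measure_pmf.expectation (N x) f = (\<Sum>a\<in>B. f a * pmf (N x) a)"
      using x unfolding B_def by (intro integral_measure_pmf_real[OF B[unfolded B_def]]) auto
    then show "pmf M x * (\<Sum>a\<in>B. f a * pmf (N x) a) = pmf M x * measure_pmf.expectation (N x) f" by simp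
  qed
  finally show ?thesis .
qed

lemma step_expect:
  fixes f :: "'a::euclidean_space list \<Rightarrow> real"
  assumes X: "finite X" "X \<noteq> {}" and cs: "cs \<noteq> []" and T: "cost_set X (set cs) > 0"
  shows "measure_pmf.expectation (kpp_run X (Suc n) cs) f =
    (\<Sum>x\<in>X. cost_pt x (set cs) / cost_set X (set cs) * measure_pmf.expectation (kpp_run X n (cs @ [x])) f)"
proof -
  have st: "kpp_step X cs = map_pmf (\<lambda>x. cs @ [x]) (d2_pmf X (set cs))"
    using cs T by (simp add: kpp_step_def)
  have "kpp_run X (Suc n) cs = bind_pmf (d2_pmf X (set cs)) (\<lambda>x. kpp_run X n (cs @ [x]))"
    unfolding run_Suc_first st by (simp add: bind_map_pmf)
  then have "measure_pmf.expectation (kpp_run X (Suc n) cs) f =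
      (\<Sum>x\<in>X. pmf (d2_pmf X (set cs)) x * measure_pmf.expectation (kpp_run X n (cs @ [x])) f)"
    using set_d2_pmf[OF X(1) _ _ T] cs finite_run[OF X]
    by (simp add: exp_bind[OF X(1)])
  also have "\<dots> = (\<Sum>x\<in>X. cost_pt x (set cs) / cost_set X (set cs) * measure_pmf.expectation (kpp_run X n (cs @ [x])) f)"
    using d2_pmf_pmf[OF X(1) _ _ T] cs by (intro sum.cong refl) simp
  finally show ?thesis .
qed


definition Phi :: "int \<Rightarrow> real \<Rightarrow> real" where
  "Phi m y = (if m < 0 then 1 else psi (nat m + 1) y)"

definition Fp :: "int \<Rightarrow> real \<Rightarrow> real \<Rightarrow> real" where
  "Fp m H V = V * Phi m (H / V)"

lemma Phi_nonneg: "0 \<le> y \<Longrightarrow> 0 \<le> Phi m y"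
  unfolding Phi_def by (auto intro: psi_nonneg)

lemma Phi_mono: "0 \<le> x \<Longrightarrow> x \<le> y \<Longrightarrow> Phi m x \<le> Phi m y"
  unfolding Phi_def by (auto intro: psi_mono)

lemma Phi_concave: "concave_on {0..} (Phi m)"
proof (cases "m < 0")
  case True
  then have "Phi m = (\<lambda>x. 1)" by (auto simp: Phi_def fun_eq_iff)
  then show ?thesis by (simp add: concave_on_const)
next
  case False
  then have "Phi m = psi (nat m + 1)" by (auto simp: Phi_def fun_eq_iff)
  then show ?thesis using psi_concave[of "nat m + 1"] by simp
qed

lemma Phi_rec: "0 \<le> y \<Longrightarrow> y * Phi (m - 1) y \<le> Phi m y * (1 + y)"
proof -
  assume y: "0 \<le> y"
  consider "m < 0" | "m = 0" | "m \<ge> 1" by linarith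
  then show ?thesis
  proof cases
    case 1 then show ?thesis by (simp add: Phi_def)
  next
    case 2 then show ?thesis using psi_1_rec[OF y] by (simp add: Phi_def)
  next
    case 3
    have a: "Phi (m - 1) y = psi (nat m) y" using 3 by (simp add: Phi_def nat_diff_distrib)
    have b: "Phi m y = psi (Suc (nat m)) y" using 3 by (simp add: Phi_def)
    show ?thesis unfolding a b by (rule psi_rec) (use 3 y in auto)
  qed
qed

lemma Phi_final:
  assumes m: "m \<ge> 2" and y: "0 \<le> y"
  shows "Phi m y \<le> y / (exp 1 * (real_of_int m - 1))"
proof -
  define n where "n = nat m + 1"
  have n2: "n \<ge> 2" unfolding n_def using m by simp
  have rn: "real n - 1 = real_of_int m" unfolding n_def using m by simp
  have "Phi m y = psi n y" unfolding Phi_def n_def using m by simp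
  also have "\<dots> \<le> sl n * y" by (rule psi_le_sl) (use n2 y in auto)
  also have "\<dots> \<le> y / (exp 1 * (real_of_int m - 1))"
  proof -
    have sb: "sl n * (exp 1 * real_of_int m) \<le> 1" using sl_bound[OF n2] unfolding rn .
    have p1: "exp 1 * (real_of_int m - 1) > 0" using m by simp
    have p2: "exp 1 * (real_of_int m - 1) \<le> exp 1 * real_of_int m" by simp
    have slp: "sl n \<ge> 0" using sl_pos[of n] n2 by simp
    have "sl n * (exp 1 * (real_of_int m - 1)) \<le> sl n * (exp 1 * real_of_int m)"
      using mult_left_mono[OF p2 slp] .
    then have "sl n * (exp 1 * (real_of_int m - 1)) \<le> 1" using sb by linarith
    then have "sl n * (exp 1 * (real_of_int m - 1)) * y \<le> 1 * y" using y by (rule mult_right_mono)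
    then have "sl n * (exp 1 * (real_of_int m - 1)) * y \<le> y" by simp
    then show ?thesis using p1 by (simp add: le_divide_eq mult_ac)
  qed
  finally show ?thesis .
qed

lemma Fp_zero[simp]: "Fp m H 0 = 0"
  by (simp add: Fp_def)

lemma Fp_nonneg: "0 \<le> V \<Longrightarrow> 0 \<le> H \<Longrightarrow> 0 \<le> Fp m H V"
  unfolding Fp_def by (intro mult_nonneg_nonneg Phi_nonneg) auto

lemma Fp_monoH:
  assumes "0 \<le> V" "0 \<le> H'" "H' \<le> H"
  shows "Fp m H' V \<le> Fp m H V"
proof (cases "V = 0")
  case True then show ?thesis by simp
next
  case False
  then have V: "V > 0" using assms by simp
  have "Phi m (H' / V) \<le> Phi m (H / V)"
    using assms V by (intro Phi_mono divide_right_mono) auto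
  then show ?thesis unfolding Fp_def using V by (simp add: mult_left_mono)
qed

lemma Fp_monoU:
  assumes V': "0 \<le> V'" and VV: "V' \<le> V" and H: "0 \<le> H"
  shows "Fp m H V' \<le> Fp m H V"
proof (cases "V' = 0")
  case True then show ?thesis using Fp_nonneg[of V H m] V' VV H by simp
next
  case False
  then have V'p: "V' > 0" using V' by simp
  then have Vp: "V > 0" using VV by simp
  define t where "t = V' / V"
  have t0: "0 \<le> t" "t \<le> 1" unfolding t_def using V'p Vp VV by auto
  have all: "\<And>x y u v. x \<ge> 0 \<Longrightarrow> y \<ge> 0 \<Longrightarrow> u \<ge> 0 \<Longrightarrow> v \<ge> 0 \<Longrightarrow> u + v = 1 \<Longrightarrow>
      u * Phi m x + v * Phi m y \<le> Phi m (u * x + v * y)"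
    using Phi_concave[of m] unfolding concave_on_iff by auto
  have y0: "0 \<le> H / V'" using H V'p by simp
  have c: "t * Phi m (H / V') + (1 - t) * Phi m 0 \<le> Phi m (t * (H / V') + (1 - t) * 0)"
    by (rule all[OF y0]) (use t0 in auto)
  have e: "t * (H / V') + (1 - t) * 0 = H / V" unfolding t_def using V'p by simp
  have "(1 - t) * Phi m 0 \<ge> 0" using t0 Phi_nonneg[of 0 m] by simp
  moreover have c': "t * Phi m (H / V') + (1 - t) * Phi m 0 \<le> Phi m (H / V)" using c unfolding e .
  ultimately have "t * Phi m (H / V') \<le> Phi m (H / V)" by linarith
  then have "V * (t * Phi m (H / V')) \<le> V * Phi m (H / V)" using Vp by (simp add: mult_left_mono)
  then show ?thesis unfolding Fp_def t_def using Vp by simp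
qed

lemma Fp_final:
  assumes m: "m \<ge> 2" and V: "0 \<le> V" and H: "0 \<le> H"
  shows "Fp m H V \<le> H / (exp 1 * (real_of_int m - 1))"
proof (cases "V = 0")
  case True
  have "exp 1 * (real_of_int m - 1) > 0" using m by simp
  then show ?thesis using True H by simp
next
  case False
  then have Vp: "V > 0" using V by simp
  have y0: "0 \<le> H / V" using H Vp by simp
  define c where "c = exp 1 * (real_of_int m - 1)"
  have cp: "c > 0" unfolding c_def using m by simp
  have "Phi m (H / V) \<le> (H / V) / c"
    unfolding c_def by (rule Phi_final[OF m y0])
  then have a: "V * Phi m (H / V) \<le> V * ((H / V) / c)"
    using Vp by (intro mult_left_mono) auto
  have b: "V * ((H / V) / c) = H / c" using Vp cp by simp
  show ?thesis using a b unfolding Fp_def c_def by simp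
qed

lemma Fp_rec_key:
  assumes V: "V > 0" and H: "0 \<le> H" and cov: "0 \<le> cov" "cov \<le> H"
  shows "cov * (Fp (m - 1) H V - Fp m H V) \<le> V * Fp m H V"
proof -
  have y0: "0 \<le> H / V" using H V by simp
  have r: "(H / V) * Phi (m - 1) (H / V) \<le> Phi m (H / V) * (1 + H / V)"
    by (rule Phi_rec[OF y0])
  have VV: "0 \<le> V * V" using V by simp
  have l: "V * V * ((H / V) * Phi (m - 1) (H / V)) \<le> V * V * (Phi m (H / V) * (1 + H / V))"
    using mult_left_mono[OF r VV] .
  have e1: "V * V * ((H / V) * Phi (m - 1) (H / V)) = H * Fp (m - 1) H V"
    unfolding Fp_def using V by simp
  have e2: "V * V * (Phi m (H / V) * (1 + H / V)) = Fp m H V * (V + H)"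
    unfolding Fp_def using V by (simp add: field_simps)
  have k: "H * Fp (m - 1) H V \<le> Fp m H V * (V + H)" using l unfolding e1 e2 .
  show ?thesis
  proof (cases "Fp (m - 1) H V - Fp m H V \<ge> 0")
    case True
    have "cov * (Fp (m - 1) H V - Fp m H V) \<le> H * (Fp (m - 1) H V - Fp m H V)"
      using True cov by (intro mult_right_mono) auto
    also have "\<dots> \<le> V * Fp m H V" using k by (simp add: algebra_simps)
    finally show ?thesis .
  next
    case False
    then have "cov * (Fp (m - 1) H V - Fp m H V) \<le> 0" using cov by (simp add: mult_nonneg_nonpos)
    also have "0 \<le> V * Fp m H V" using Fp_nonneg[of V H m] V H by simp
    finally show ?thesis .
  qed
qed


lemma take_append_le: "s \<le> length cs \<Longrightarrow> take s (cs @ [x]) = take s cs"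
  by simp

lemma Htilde_cl_append_cov:
  assumes "Q \<inter> set cs \<noteq> {}"
  shows "Htilde_cl Q (cs @ [x]) = Htilde_cl Q cs"
proof -
  define p where "p = (\<lambda>s. Q \<inter> set (take s cs) \<noteq> {})"
  define p' where "p' = (\<lambda>s. Q \<inter> set (take s (cs @ [x])) \<noteq> {})"
  have pl: "p (length cs)" unfolding p_def using assms by simp
  define s0 where "s0 = (LEAST s. p s)"
  have s0: "p s0" unfolding s0_def by (rule LeastI[of p, OF pl])
  have s0le: "s0 \<le> length cs" unfolding s0_def by (rule Least_le[of p, OF pl])
  have "(LEAST s. p' s) = s0"
  proof (rule Least_equality)
    show "p' s0" using s0 s0le unfolding p_def p'_def by simp
  next
    fix s assume "p' s"
    show "s0 \<le> s"
    proof (cases "s \<le> length cs")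
      case True
      then have "p s" using \<open>p' s\<close> unfolding p_def p'_def by simp
      then show ?thesis unfolding s0_def by (rule Least_le)
    next
      case False then show ?thesis using s0le by simp
    qed
  qed
  then show ?thesis using assms s0le unfolding Htilde_cl_def p'_def s0_def p_def by auto
qed

lemma Htilde_cl_append_out:
  assumes "Q \<inter> set cs = {}" "x \<notin> Q"
  shows "Htilde_cl Q (cs @ [x]) = Htilde_cl Q cs"
  using assms unfolding Htilde_cl_def by auto

lemma Htilde_cl_append_new:
  assumes "Q \<inter> set cs = {}" "x \<in> Q"
  shows "Htilde_cl Q (cs @ [x]) = cost_set Q (insert x (set cs))"
proof -
  have "(LEAST s. Q \<inter> set (take s (cs @ [x])) \<noteq> {}) = Suc (length cs)"
  proof (rule Least_equality)
    show "Q \<inter> set (take (Suc (length cs)) (cs @ [x])) \<noteq> {}" using assms by auto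
  next
    fix s assume s: "Q \<inter> set (take s (cs @ [x])) \<noteq> {}"
    show "Suc (length cs) \<le> s"
    proof (rule ccontr)
      assume "\<not> Suc (length cs) \<le> s"
      then have "take s (cs @ [x]) = take s cs" by simp
      then have "set (take s (cs @ [x])) \<subseteq> set cs" by (metis set_take_subset)
      then show False using s assms(1) by blast
    qed
  qed
  then show ?thesis using assms unfolding Htilde_cl_def by auto
qed

lemma Htilde_cl_cov_cost:
  assumes "Q \<inter> set cs \<noteq> {}"
  shows "\<exists>s. take s cs \<noteq> [] \<and> Htilde_cl Q cs = cost_set Q (set (take s cs))"
proof -
  define p where "p = (\<lambda>s. Q \<inter> set (take s cs) \<noteq> {})"
  have pl: "p (length cs)" unfolding p_def using assms by simp
  have s0: "p (LEAST s. p s)" by (rule LeastI[of p, OF pl])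
  have "take (LEAST s. p s) cs \<noteq> []"
  proof
    assume h: "take (LEAST s. p s) cs = []"
    have "Q \<inter> set (take (LEAST s. p s) cs) \<noteq> {}" using s0 unfolding p_def .
    then show False unfolding h by simp
  qed
  then show ?thesis using assms unfolding Htilde_cl_def p_def by auto
qed

lemma Htilde_cl_nonneg:
  assumes "cs \<noteq> []"
  shows "0 \<le> Htilde_cl Q cs"
proof (cases "Q \<inter> set cs = {}")
  case True then show ?thesis unfolding Htilde_cl_def using OPT1_nonneg[of Q] by simp
next
  case False
  then obtain s where s: "take s cs \<noteq> []" "Htilde_cl Q cs = cost_set Q (set (take s cs))"
    using Htilde_cl_cov_cost by blast
  then show ?thesis by (simp add: cost_set_nonneg)
qed

lemma cost_le_Htilde_cl:
  assumes "Q \<inter> set cs \<noteq> {}"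
  shows "cost_set Q (set cs) \<le> Htilde_cl Q cs"
proof -
  obtain s where s: "take s cs \<noteq> []" "Htilde_cl Q cs = cost_set Q (set (take s cs))"
    using Htilde_cl_cov_cost[OF assms] by blast
  have "cost_set Q (set cs) \<le> cost_set Q (set (take s cs))"
    using s(1) by (intro cost_set_mono) (auto simp: set_take_subset)
  then show ?thesis using s(2) by simp
qed

lemma Htilde_nonneg: "cs \<noteq> [] \<Longrightarrow> 0 \<le> Htilde k P cs"
  unfolding Htilde_def by (intro sum_nonneg Htilde_cl_nonneg)

lemma U_nonneg: "cs \<noteq> [] \<Longrightarrow> 0 \<le> U Q (set cs)"
  unfolding U_def by (auto intro: cost_set_nonneg)

definition unc :: "nat \<Rightarrow> (nat \<Rightarrow> 'a set) \<Rightarrow> 'a list \<Rightarrow> nat set" where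
  "unc k P cs = {j. j < k \<and> P j \<inter> set cs = {}}"

lemma finite_unc: "finite (unc k P cs)"
  unfolding unc_def by simp

context
  fixes X :: "'a::euclidean_space set" and k :: nat and P :: "nat \<Rightarrow> 'a set"
  assumes X: "finite X" "X \<noteq> {}" and oc: "optimal_clustering X k P"
begin

lemma union_P: "(\<Union>i<k. P i) = X"
  using oc unfolding optimal_clustering_def by simp

lemma disj_P: "i < k \<Longrightarrow> j < k \<Longrightarrow> i \<noteq> j \<Longrightarrow> P i \<inter> P j = {}"
  using oc unfolding optimal_clustering_def by simp

lemma P_sub: "j < k \<Longrightarrow> P j \<subseteq> X"
  using union_P by auto

lemma P_fin: "j < k \<Longrightarrow> finite (P j)"
  using P_sub X(1) finite_subset by blast

lemma clus_ex: "x \<in> X \<Longrightarrow> \<exists>j<k. x \<in> P j"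
  using union_P by auto

lemma clus_uniq: "x \<in> P j \<Longrightarrow> x \<in> P l \<Longrightarrow> j < k \<Longrightarrow> l < k \<Longrightarrow> j = l"
  using disj_P by blast

lemma sum_X_split: "(\<Sum>x\<in>X. f x) = (\<Sum>j<k. \<Sum>x\<in>P j. f x)"
proof -
  have "(\<Sum>x\<in>X. f x) = (\<Sum>x\<in>(\<Union>j\<in>{..<k}. P j). f x)" using union_P by simp
  also have "\<dots> = (\<Sum>j<k. \<Sum>x\<in>P j. f x)"
    by (rule sum.UNION_disjoint) (auto intro: P_fin dest: disj_P)
  finally show ?thesis .
qed

lemma unc_append:
  assumes "j < k" "x \<in> P j"
  shows "unc k P (cs @ [x]) = unc k P cs - {j}"
proof -
  have "l < k \<Longrightarrow> l \<noteq> j \<Longrightarrow> x \<notin> P l" for l using assms clus_uniq by blast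
  then show ?thesis unfolding unc_def using assms by auto
qed

lemma Htilde_append_cov:
  assumes j: "j < k" "x \<in> P j" and cov: "P j \<inter> set cs \<noteq> {}"
  shows "Htilde k P (cs @ [x]) = Htilde k P cs"
  unfolding Htilde_def
proof (intro sum.cong refl)
  fix l assume l: "l \<in> {..<k}"
  show "Htilde_cl (P l) (cs @ [x]) = Htilde_cl (P l) cs"
  proof (cases "P l \<inter> set cs = {}")
    case True
    then have "l \<noteq> j" using cov by auto
    then have "x \<notin> P l" using j l clus_uniq by blast
    then show ?thesis by (rule Htilde_cl_append_out[OF True])
  next
    case False then show ?thesis by (rule Htilde_cl_append_cov)
  qed
qed

lemma Htilde_append_new:
  assumes j: "j < k" "x \<in> P j" and unc: "P j \<inter> set cs = {}"
  shows "Htilde k P (cs @ [x]) = Htilde k P cs - 5 * OPT 1 (P j) + cost_set (P j) (insert x (set cs))"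
proof -
  have o: "Htilde_cl (P l) (cs @ [x]) = Htilde_cl (P l) cs" if l: "l \<in> {..<k} - {j}" for l
  proof (cases "P l \<inter> set cs = {}")
    case True
    have "x \<notin> P l" using j l clus_uniq by blast
    then show ?thesis by (rule Htilde_cl_append_out[OF True])
  next
    case False then show ?thesis by (rule Htilde_cl_append_cov)
  qed
  have jk: "j \<in> {..<k}" using j by simp
  have "Htilde k P (cs @ [x]) = Htilde_cl (P j) (cs @ [x]) + (\<Sum>l\<in>{..<k} - {j}. Htilde_cl (P l) (cs @ [x]))"
    unfolding Htilde_def by (rule sum.remove[OF _ jk]) simp
  also have "(\<Sum>l\<in>{..<k} - {j}. Htilde_cl (P l) (cs @ [x])) = (\<Sum>l\<in>{..<k} - {j}. Htilde_cl (P l) cs)"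
    using o by (rule sum.cong[OF refl])
  also have "Htilde_cl (P j) (cs @ [x]) = cost_set (P j) (insert x (set cs))"
    using unc j(2) by (rule Htilde_cl_append_new)
  also have "Htilde k P cs = Htilde_cl (P j) cs + (\<Sum>l\<in>{..<k} - {j}. Htilde_cl (P l) cs)"
    unfolding Htilde_def by (rule sum.remove[OF _ jk]) simp
  moreover have "Htilde_cl (P j) cs = 5 * OPT 1 (P j)" using unc unfolding Htilde_cl_def by simp
  ultimately show ?thesis by simp
qed

end


lemma jensen_step:
  fixes Q C :: "'a::euclidean_space set" and V H T :: real and m :: int
  assumes Q: "finite Q" "Q \<noteq> {}" and C: "finite C" "C \<noteq> {}" and disj: "Q \<inter> C = {}"
    and V: "V > 0" and T: "T > 0"
    and Hx: "\<And>x. x \<in> Q \<Longrightarrow> 0 \<le> H - 5 * OPT 1 Q + cost_set Q (insert x C)"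
  shows "(\<Sum>x\<in>Q. cost_pt x C / T * Fp m (H - 5 * OPT 1 Q + cost_set Q (insert x C)) V)
      \<le> cost_set Q C / T * Fp m H V"
proof -
  define A where "A = cost_set Q C"
  define Ob where "Ob = OPT 1 Q"
  define s where "s x = cost_set Q (insert x C)" for x
  define a where "a x = cost_pt x C" for x
  define y where "y x = (H - 5 * Ob + s x) / V" for x
  define w where "w x = a x / A" for x
  have apos: "a x > 0" if "x \<in> Q" for x
  proof -
    have "x \<notin> C" using that disj by auto
    then have "a x \<noteq> 0" unfolding a_def using cost_pt_zero_iff[OF C] by simp
    moreover have "a x \<ge> 0" unfolding a_def by (rule cost_pt_nonneg[OF C])
    ultimately show ?thesis by simp
  qed
  have Apos: "A > 0" unfolding A_def cost_set_def using apos Q unfolding a_def by (intro sum_pos) auto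
  have wsum: "(\<Sum>x\<in>Q. w x) = 1" unfolding w_def using Apos by (simp add: sum_divide_distrib[symmetric] A_def a_def cost_set_def)
  have w0: "w x \<ge> 0" if "x \<in> Q" for x unfolding w_def using apos[OF that] Apos by simp
  have y0: "y x \<in> {0..}" if "x \<in> Q" for x unfolding y_def s_def Ob_def using Hx[OF that] V by simp
  have J: "(\<Sum>x\<in>Q. w x * Phi m (y x)) \<le> Phi m (\<Sum>x\<in>Q. w x *\<^sub>R y x)"
    by (rule concave_on_sum[OF Q Phi_concave wsum w0 y0])
  have wy: "(\<Sum>x\<in>Q. w x *\<^sub>R y x) = (H - 5 * Ob) / V + (\<Sum>x\<in>Q. a x * s x) / (A * V)"
  proof -
    have "(\<Sum>x\<in>Q. w x *\<^sub>R y x) = (\<Sum>x\<in>Q. (H - 5 * Ob) / V * w x + a x * s x / (A * V))"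
      unfolding w_def y_def using Apos V by (intro sum.cong refl) (simp add: field_simps)
    also have "\<dots> = (H - 5 * Ob) / V * (\<Sum>x\<in>Q. w x) + (\<Sum>x\<in>Q. a x * s x) / (A * V)"
      by (simp add: sum.distrib sum_distrib_left sum_divide_distrib)
    finally show ?thesis using wsum by simp
  qed
  have five: "(\<Sum>x\<in>Q. a x * s x) \<le> 5 * Ob * A"
    unfolding a_def s_def Ob_def A_def by (rule five_lemma[OF Q C])
  have "(\<Sum>x\<in>Q. a x * s x) / (A * V) \<le> 5 * Ob * A / (A * V)"
    using five Apos V by (intro divide_right_mono) auto
  also have "\<dots> = 5 * Ob / V" using Apos by simp
  finally have "(\<Sum>x\<in>Q. w x *\<^sub>R y x) \<le> H / V" unfolding wy by (simp add: diff_divide_distrib)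
  moreover have "0 \<le> (\<Sum>x\<in>Q. w x *\<^sub>R y x)" using w0 y0 by (intro sum_nonneg) auto
  ultimately have M: "Phi m (\<Sum>x\<in>Q. w x *\<^sub>R y x) \<le> Phi m (H / V)" by (rule Phi_mono[rotated])
  have "(\<Sum>x\<in>Q. cost_pt x C / T * Fp m (H - 5 * OPT 1 Q + cost_set Q (insert x C)) V)
      = (A / T * V) * (\<Sum>x\<in>Q. w x * Phi m (y x))"
    unfolding sum_distrib_left
    by (intro sum.cong refl) (use Apos T V in \<open>simp add: Fp_def w_def y_def a_def s_def Ob_def field_simps\<close>)
  also have "\<dots> \<le> (A / T * V) * Phi m (H / V)"
    using J M Apos T V by (intro mult_left_mono) auto
  also have "\<dots> = cost_set Q C / T * Fp m H V" unfolding Fp_def A_def by simp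
  finally show ?thesis .
qed


lemma exp_zero:
  fixes f :: "'b \<Rightarrow> real"
  assumes "\<And>ds. ds \<in> set_pmf M \<Longrightarrow> f ds = 0"
  shows "measure_pmf.expectation M f = 0"
proof -
  have "measure_pmf.expectation M f = (\<Sum>a\<in>{}. f a * pmf M a)"
    using assms by (intro integral_measure_pmf_real) auto
  then show ?thesis by simp
qed

lemma exp_return: "measure_pmf.expectation (return_pmf x) (f :: 'b \<Rightarrow> real) = f x"
proof -
  have "measure_pmf.expectation (return_pmf x) f = (\<Sum>a\<in>{x}. f a * pmf (return_pmf x) a)"
    by (intro integral_measure_pmf_real) auto
  then show ?thesis by simp
qed

lemma U_zero_stays:
  assumes Q: "finite Q" and D: "finite D" "C \<subseteq> D" and C: "C \<noteq> {}" and U0: "U Q C = 0"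
  shows "U Q D = 0"
proof (cases "Q \<inter> C = {}")
  case False
  then have "Q \<inter> D \<noteq> {}" using D by auto
  then show ?thesis by (simp add: U_def)
next
  case True
  have Cf: "finite C" using D finite_subset by blast
  have "cost_set Q C = 0" using U0 True by (simp add: U_def)
  then have "\<forall>x\<in>Q. cost_pt x C = 0"
    unfolding cost_set_def using Q cost_pt_nonneg[OF Cf C] by (subst (asm) sum_nonneg_eq_0_iff) auto
  then have "Q \<subseteq> C" using cost_pt_zero_iff[OF Cf C] by auto
  then have "Q = {}" using True by auto
  then show ?thesis by (simp add: U_def cost_set_def)
qed

context
  fixes X :: "'a::euclidean_space set" and k :: nat and P :: "nat \<Rightarrow> 'a set" and i0 :: nat
  assumes X: "finite X" "X \<noteq> {}" and oc: "optimal_clustering X k P" and i0: "i0 < k"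
begin

lemma invariant:
  "cs \<noteq> [] \<Longrightarrow> set cs \<subseteq> X \<Longrightarrow>
   measure_pmf.expectation (kpp_run X R cs) (\<lambda>ds. U (P i0) (set ds))
     \<le> Fp (int R - int (card (unc k P cs))) (Htilde k P cs) (U (P i0) (set cs))"
proof (induction R arbitrary: cs)
  case 0
  have e: "measure_pmf.expectation (kpp_run X 0 cs) (\<lambda>ds. U (P i0) (set ds)) = U (P i0) (set cs)"
    by (simp add: exp_return)
  show ?case
  proof (cases "U (P i0) (set cs) = 0")
    case True then show ?thesis unfolding e by simp
  next
    case False
    then have "P i0 \<inter> set cs = {}" by (auto simp: U_def split: if_splits)
    then have "i0 \<in> unc k P cs" unfolding unc_def using i0 by simp
    then have "card (unc k P cs) \<ge> 1" using finite_unc[of k P cs] by (metis One_nat_def Suc_leI card_gt_0_iff empty_iff)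
    then have "int 0 - int (card (unc k P cs)) < 0" by simp
    then show ?thesis unfolding e Fp_def Phi_def by simp
  qed
next
  case (Suc R)
  note cs = Suc.prems(1) and sub = Suc.prems(2)
  define C where "C = set cs"
  define V where "V = U (P i0) C"
  define H where "H = Htilde k P cs"
  define T where "T = cost_set X C"
  define u where "u = card (unc k P cs)"
  define m where "m = int (Suc R) - int u"
  define G where "G = Fp m H V"
  define G1 where "G1 = Fp (m - 1) H V"
  have Cf: "finite C" "C \<noteq> {}" unfolding C_def using cs by auto
  have CX: "C \<subseteq> X" unfolding C_def using sub .
  have V0: "V \<ge> 0" unfolding V_def C_def by (rule U_nonneg[OF cs])
  have H0: "H \<ge> 0" unfolding H_def by (rule Htilde_nonneg[OF cs])
  have Pi0f: "finite (P i0)" by (rule P_fin[OF X oc i0])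
  show ?case
  proof (cases "V = 0")
    case True
    have "measure_pmf.expectation (kpp_run X (Suc R) cs) (\<lambda>ds. U (P i0) (set ds)) = 0"
    proof (rule exp_zero)
      fix ds assume "ds \<in> set_pmf (kpp_run X (Suc R) cs)"
      then obtain ys where "ds = cs @ ys" using run_support[OF X] by blast
      then show "U (P i0) (set ds) = 0"
        using True U_zero_stays[OF Pi0f _ _ Cf(2), of "set ds"] unfolding V_def C_def by auto
    qed
    then show ?thesis using True unfolding V_def C_def by simp
  next
    case False
    then have Vp: "V > 0" using V0 by simp
    have unc0: "P i0 \<inter> C = {}" using False unfolding V_def U_def by (auto split: if_splits)
    have Veq: "V = cost_set (P i0) C" unfolding V_def U_def using unc0 by simp
    have TV: "V \<le> T"
    proof -
      have "cost_set (P i0) C \<le> cost_set X C"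
        unfolding cost_set_def using P_sub[OF X oc i0] X(1) cost_pt_nonneg[OF Cf]
        by (intro sum_mono2) auto
      then show ?thesis unfolding Veq T_def .
    qed
    then have Tp: "T > 0" using Vp by simp
    have i0unc: "i0 \<in> unc k P cs" unfolding unc_def using i0 unc0 C_def by simp
    define g where "g x = cost_pt x C / T * Fp (int R - int (card (unc k P (cs @ [x])))) (Htilde k P (cs @ [x])) (U (P i0) (set (cs @ [x])))" for x
    have step: "measure_pmf.expectation (kpp_run X (Suc R) cs) (\<lambda>ds. U (P i0) (set ds))
        = (\<Sum>x\<in>X. cost_pt x C / T * measure_pmf.expectation (kpp_run X R (cs @ [x])) (\<lambda>ds. U (P i0) (set ds)))"
      unfolding C_def T_def using step_expect[OF X cs] Tp unfolding T_def C_def by simp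
    also have "\<dots> \<le> (\<Sum>x\<in>X. g x)"
      unfolding g_def
    proof (intro sum_mono mult_left_mono)
      fix x assume x: "x \<in> X"
      show "measure_pmf.expectation (kpp_run X R (cs @ [x])) (\<lambda>ds. U (P i0) (set ds))
          \<le> Fp (int R - int (card (unc k P (cs @ [x])))) (Htilde k P (cs @ [x])) (U (P i0) (set (cs @ [x])))"
        by (rule Suc.IH) (use x sub in auto)
      show "0 \<le> cost_pt x C / T" using cost_pt_nonneg[OF Cf] Tp by simp
    qed
    also have "\<dots> = (\<Sum>j<k. \<Sum>x\<in>P j. g x)" by (rule sum_X_split[OF X oc])
    finally have E1: "measure_pmf.expectation (kpp_run X (Suc R) cs) (\<lambda>ds. U (P i0) (set ds)) \<le> (\<Sum>j<k. \<Sum>x\<in>P j. g x)" .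
    define b where "b j = (if j = i0 then 0 else if P j \<inter> C \<noteq> {} then cost_set (P j) C / T * G1
                          else cost_set (P j) C / T * G)" for j
    have Ux: "0 \<le> U (P i0) (set (cs @ [x])) \<and> U (P i0) (set (cs @ [x])) \<le> V" if "x \<in> X" "x \<notin> P i0" for x
    proof -
      have "set (cs @ [x]) = insert x C" unfolding C_def by simp
      moreover have "P i0 \<inter> insert x C = {}" using unc0 that by auto
      ultimately have "U (P i0) (set (cs @ [x])) = cost_set (P i0) (insert x C)" unfolding U_def by simp
      moreover have "cost_set (P i0) (insert x C) \<le> cost_set (P i0) C" using Cf by (intro cost_set_mono) auto
      moreover have "0 \<le> cost_set (P i0) (insert x C)" using Cf by (intro cost_set_nonneg) auto
      ultimately show ?thesis unfolding Veq by simp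
    qed
    have perj: "(\<Sum>x\<in>P j. g x) \<le> b j" if j: "j < k" for j
    proof (cases "j = i0")
      case True
      have "g x = 0" if "x \<in> P j" for x
      proof -
        have "P i0 \<inter> set (cs @ [x]) \<noteq> {}" using that True by auto
        then have "U (P i0) (set (cs @ [x])) = 0" unfolding U_def by (simp only: if_False)
        then show ?thesis unfolding g_def by simp
      qed
      then show ?thesis unfolding b_def using True by simp
    next
      case False
      have xX: "x \<in> X" if "x \<in> P j" for x using P_sub[OF X oc j] that by auto
      have xni0: "x \<notin> P i0" if "x \<in> P j" for x using that False clus_uniq[OF X oc _ _ j i0] by blast
      show ?thesis
      proof (cases "P j \<inter> C \<noteq> {}")
        case cov: True
        have "g x \<le> cost_pt x C / T * G1" if x: "x \<in> P j" for x
        proof -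
          have "unc k P (cs @ [x]) = unc k P cs - {j}" by (rule unc_append[OF X oc j x])
          also have "\<dots> = unc k P cs" using cov unfolding unc_def C_def by auto
          finally have u1: "int R - int (card (unc k P (cs @ [x]))) = m - 1" unfolding m_def u_def by simp
          have h1: "Htilde k P (cs @ [x]) = H" unfolding H_def using Htilde_append_cov[OF X oc j x] cov C_def by simp
          have "Fp (m - 1) H (U (P i0) (set (cs @ [x]))) \<le> Fp (m - 1) H V"
            using Ux[OF xX[OF x] xni0[OF x]] H0 by (intro Fp_monoU) auto
          then show ?thesis unfolding g_def u1 h1 G1_def
            using cost_pt_nonneg[OF Cf] Tp by (intro mult_left_mono) auto
        qed
        then have "(\<Sum>x\<in>P j. g x) \<le> (\<Sum>x\<in>P j. cost_pt x C / T * G1)" by (rule sum_mono)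
        also have "\<dots> = cost_set (P j) C / T * G1"
          unfolding cost_set_def by (simp add: sum_distrib_right sum_divide_distrib)
        finally show ?thesis unfolding b_def using False cov by simp
      next
        case unc: False
        then have uncj: "P j \<inter> C = {}" by simp
        have jin: "j \<in> unc k P cs" unfolding unc_def using j uncj C_def by simp
        have g_le: "g x \<le> cost_pt x C / T * Fp m (H - 5 * OPT 1 (P j) + cost_set (P j) (insert x C)) V"
          if x: "x \<in> P j" for x
        proof -
          have "unc k P (cs @ [x]) = unc k P cs - {j}" by (rule unc_append[OF X oc j x])
          then have "card (unc k P (cs @ [x])) = u - 1" unfolding u_def using jin finite_unc by simp
          moreover have "u \<ge> 1" unfolding u_def using jin finite_unc[of k P cs]
            by (metis One_nat_def Suc_leI card_gt_0_iff empty_iff)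
          ultimately have u1: "int R - int (card (unc k P (cs @ [x]))) = m" unfolding m_def by simp
          have h1: "Htilde k P (cs @ [x]) = H - 5 * OPT 1 (P j) + cost_set (P j) (insert x C)"
            unfolding H_def C_def using Htilde_append_new[OF X oc j x] uncj C_def by simp
          have hx0: "0 \<le> Htilde k P (cs @ [x])" by (rule Htilde_nonneg) simp
          have "Fp m (Htilde k P (cs @ [x])) (U (P i0) (set (cs @ [x]))) \<le> Fp m (Htilde k P (cs @ [x])) V"
            using Ux[OF xX[OF x] xni0[OF x]] hx0 by (intro Fp_monoU) auto
          then show ?thesis unfolding g_def u1 h1[symmetric]
            using cost_pt_nonneg[OF Cf] Tp by (intro mult_left_mono) auto
        qed
        then have s1: "(\<Sum>x\<in>P j. g x) \<le> (\<Sum>x\<in>P j. cost_pt x C / T * Fp m (H - 5 * OPT 1 (P j) + cost_set (P j) (insert x C)) V)"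
          by (rule sum_mono)
        show ?thesis
        proof (cases "P j = {}")
          case True
          then show ?thesis using s1 unfolding b_def using False unc by (simp add: cost_set_def)
        next
          case ne: False
          have hx: "0 \<le> H - 5 * OPT 1 (P j) + cost_set (P j) (insert x C)" if x: "x \<in> P j" for x
          proof -
            have "Htilde k P (cs @ [x]) = H - 5 * OPT 1 (P j) + cost_set (P j) (insert x C)"
              unfolding H_def C_def using Htilde_append_new[OF X oc j x] uncj C_def by simp
            moreover have "0 \<le> Htilde k P (cs @ [x])" by (rule Htilde_nonneg) simp
            ultimately show ?thesis by simp
          qed
          have "(\<Sum>x\<in>P j. cost_pt x C / T * Fp m (H - 5 * OPT 1 (P j) + cost_set (P j) (insert x C)) V)
              \<le> cost_set (P j) C / T * Fp m H V"
            by (rule jensen_step[OF P_fin[OF X oc j] ne Cf uncj Vp Tp hx])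
          then show ?thesis using s1 unfolding b_def G_def using False unc by simp
        qed
      qed
    qed
    have E2: "(\<Sum>j<k. \<Sum>x\<in>P j. g x) \<le> (\<Sum>j<k. b j)" using perj by (intro sum_mono) auto
    define cov where "cov = (\<Sum>j<k. if P j \<inter> C \<noteq> {} then cost_set (P j) C else 0)"
    have cov0: "0 \<le> cov" unfolding cov_def using Cf by (intro sum_nonneg) (auto intro: cost_set_nonneg)
    have covH: "cov \<le> H"
      unfolding cov_def H_def Htilde_def
    proof (intro sum_mono)
      fix j show "(if P j \<inter> C \<noteq> {} then cost_set (P j) C else 0) \<le> Htilde_cl (P j) cs"
        using cost_le_Htilde_cl[of "P j" cs] Htilde_cl_nonneg[OF cs, of "P j"] unfolding C_def by auto
    qed
    have Tsum: "(\<Sum>j<k. cost_set (P j) C) = T"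
      unfolding T_def cost_set_def by (rule sum_X_split[OF X oc, symmetric])
    have beq: "b j = cost_set (P j) C / T * G + (if P j \<inter> C \<noteq> {} then cost_set (P j) C else 0) / T * (G1 - G)
                   - (if j = i0 then cost_set (P j) C / T * G else 0)" for j
      unfolding b_def using unc0 Tp by (auto simp: field_simps)
    have "(\<Sum>j<k. b j) = (\<Sum>j<k. cost_set (P j) C) / T * G + cov / T * (G1 - G) - cost_set (P i0) C / T * G"
      unfolding beq cov_def using i0
      by (simp add: sum.distrib sum_subtractf sum_distrib_right[symmetric] sum_divide_distrib[symmetric])
    also have "\<dots> = G + (cov * (G1 - G) - V * G) / T"
      unfolding Tsum Veq[symmetric] using Tp by (simp add: field_simps)
    also have "\<dots> \<le> G"
    proof -
      have "cov * (G1 - G) \<le> V * G" unfolding G_def G1_def by (rule Fp_rec_key[OF Vp H0 cov0 covH])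
      then have "(cov * (G1 - G) - V * G) / T \<le> 0" using Tp by (simp add: divide_nonpos_pos)
      then show ?thesis by simp
    qed
    finally have E3: "(\<Sum>j<k. b j) \<le> G" .
    have "measure_pmf.expectation (kpp_run X (Suc R) cs) (\<lambda>ds. U (P i0) (set ds)) \<le> G"
      using E1 E2 E3 by linarith
    then show ?thesis unfolding G_def m_def u_def H_def V_def C_def by simp
  qed
qed

end


context
  fixes X :: "'a::euclidean_space set" and k :: nat and P :: "nat \<Rightarrow> 'a set"
  assumes X: "finite X" "X \<noteq> {}" and oc: "optimal_clustering X k P"
begin

lemma cov_misses:
  "set cs \<subseteq> X \<Longrightarrow> card {j. j < k \<and> P j \<inter> set cs \<noteq> {}} + misses k P cs = length cs"
proof (induction cs rule: rev_induct)
  case Nil then show ?case by (simp add: misses_def)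
next
  case (snoc x cs)
  have sub: "set cs \<subseteq> X" and xX: "x \<in> X" using snoc.prems by auto
  obtain j where j: "j < k" "x \<in> P j" using clus_ex[OF X oc xX] by blast
  have notl: "x \<notin> P l" if "l < k" "l \<noteq> j" for l using clus_uniq[OF X oc _ _ j(1) that(1)] j(2) that(2) by blast
  define c where "c = (P j \<inter> set cs \<noteq> {})"
  define cv where "cv = {l. l < k \<and> P l \<inter> set cs \<noteq> {}}"
  have cvf: "finite cv" unfolding cv_def by simp
  have cv': "{l. l < k \<and> P l \<inter> set (cs @ [x]) \<noteq> {}} = insert j cv"
    unfolding cv_def using j notl by auto
  have ccard: "card {l. l < k \<and> P l \<inter> set (cs @ [x]) \<noteq> {}} = card cv + (if c then 0 else 1)"
  proof (cases c)
    case True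
    then have "j \<in> cv" unfolding cv_def c_def using j by simp
    then show ?thesis unfolding cv' using True by (simp add: insert_absorb)
  next
    case False
    then have "j \<notin> cv" unfolding cv_def c_def by simp
    then show ?thesis unfolding cv' using False cvf by simp
  qed
  define n where "n = length cs"
  define phi where "phi ys i = (\<exists>j'<i. \<exists>l<k. ys ! j' \<in> P l \<and> ys ! i \<in> P l)" for ys :: "'a list" and i
  have m_def': "misses k P ys = card {i. i < length ys \<and> phi ys i}" for ys unfolding misses_def phi_def ..
  have e1: "phi (cs @ [x]) i = phi cs i" if "i < n" for i
  proof -
    have a: "(cs @ [x]) ! i = cs ! i" using that unfolding n_def by (simp add: nth_append)
    have b: "(cs @ [x]) ! j' = cs ! j'" if "j' < i" for j'
      using that \<open>i < n\<close> unfolding n_def by (simp add: nth_append)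
    show ?thesis
    proof
      assume "phi (cs @ [x]) i"
      then obtain j' l where "j' < i" "l < k" "(cs @ [x]) ! j' \<in> P l" "(cs @ [x]) ! i \<in> P l"
        unfolding phi_def by blast
      then show "phi cs i" unfolding phi_def a b[OF \<open>j' < i\<close>] by blast
    next
      assume "phi cs i"
      then obtain j' l where "j' < i" "l < k" "cs ! j' \<in> P l" "cs ! i \<in> P l"
        unfolding phi_def by blast
      then show "phi (cs @ [x]) i" unfolding phi_def a using b[OF \<open>j' < i\<close>] by metis
    qed
  qed
  have xn: "(cs @ [x]) ! n = x" unfolding n_def by simp
  have e2: "phi (cs @ [x]) n = c"
  proof
    assume "phi (cs @ [x]) n"
    then obtain j' l where jl: "j' < n" "l < k" "(cs @ [x]) ! j' \<in> P l" "(cs @ [x]) ! n \<in> P l"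
      unfolding phi_def by blast
    have xl: "x \<in> P l" using jl(4) unfolding xn .
    have lj: "l = j"
    proof (rule ccontr)
      assume "l \<noteq> j"
      then have "x \<notin> P l" by (rule notl[OF jl(2)])
      then show False using xl by contradiction
    qed
    have e: "(cs @ [x]) ! j' = cs ! j'" using jl(1) unfolding n_def by (simp add: nth_append)
    have m1: "cs ! j' \<in> P j" using jl(3) unfolding e lj .
    have m2: "cs ! j' \<in> set cs" using jl(1) unfolding n_def by (rule nth_mem)
    show c unfolding c_def using m1 m2 by blast
  next
    assume c
    then obtain y where y: "y \<in> P j" "y \<in> set cs" unfolding c_def by blast
    then obtain j' where j': "j' < n" "cs ! j' = y" unfolding n_def by (auto simp: in_set_conv_nth)
    have e: "(cs @ [x]) ! j' = cs ! j'" using j'(1) unfolding n_def by (simp add: nth_append)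
    have a1: "(cs @ [x]) ! j' \<in> P j" unfolding e j'(2) by (rule y(1))
    have a2: "(cs @ [x]) ! n \<in> P j" unfolding xn by (rule j(2))
    show "phi (cs @ [x]) n" unfolding phi_def using j'(1) j(1) a1 a2 by blast
  qed
  have sets: "{i. i < length (cs @ [x]) \<and> phi (cs @ [x]) i} = {i. i < n \<and> phi cs i} \<union> {i. i = n \<and> c}"
  proof (rule set_eqI)
    fix i
    show "i \<in> {i. i < length (cs @ [x]) \<and> phi (cs @ [x]) i} \<longleftrightarrow> i \<in> {i. i < n \<and> phi cs i} \<union> {i. i = n \<and> c}"
    proof (cases "i < n")
      case True then show ?thesis using e1[OF True] unfolding n_def by auto
    next
      case False
      then show ?thesis using e2 unfolding n_def by (cases "i = length cs") auto
    qed
  qed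
  have mcard: "misses k P (cs @ [x]) = misses k P cs + (if c then 1 else 0)"
  proof -
    have "misses k P (cs @ [x]) = card ({i. i < n \<and> phi cs i} \<union> {i. i = n \<and> c})"
      unfolding m_def' sets ..
    also have "\<dots> = card {i. i < n \<and> phi cs i} + card {i. i = n \<and> c}"
      by (rule card_Un_disjoint) auto
    also have "card {i. i < n \<and> phi cs i} = misses k P cs" unfolding m_def' n_def ..
    also have "card {i. i = n \<and> c} = (if c then 1 else 0)" by (cases c) auto
    finally show ?thesis .
  qed
  show ?case using snoc.IH[OF sub] ccard mcard unfolding cv_def by simp
qed

lemma unc_cov_card: "card (unc k P cs) + card {j. j < k \<and> P j \<inter> set cs \<noteq> {}} = k"
proof -
  have "unc k P cs \<union> {j. j < k \<and> P j \<inter> set cs \<noteq> {}} = {..<k}" unfolding unc_def by auto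
  moreover have "unc k P cs \<inter> {j. j < k \<and> P j \<inter> set cs \<noteq> {}} = {}" unfolding unc_def by auto
  ultimately show ?thesis
    using card_Un_disjoint[of "unc k P cs" "{j. j < k \<and> P j \<inter> set cs \<noteq> {}}"] by (simp add: unc_def)
qed

end

theorem mainTheorem7:
  fixes X :: "'a::euclidean_space set" and k \<Delta> t i :: nat and P :: "nat \<Rightarrow> 'a set"
    and cs :: "'a list"
  assumes "finite X" and "X \<noteq> {}" and "0 < k"
    and "optimal_clustering X k P"
    and "i < k"
    and "1 \<le> t" and "t \<le> k + \<Delta>"
    and "cs \<in> set_pmf (kpp_run X t [])"
    and "int \<Delta> - int (misses k P cs) \<ge> 2"
  shows "measure_pmf.expectation (kpp_run X (k + \<Delta> - t) cs) (\<lambda>ds. U (P i) (set ds))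
         \<le> Htilde k P cs / (exp 1 * (real \<Delta> - real (misses k P cs) - 1))"
proof -
  note X = assms(1,2) and oc = assms(4) and i = assms(5)
  obtain ys where ys: "cs = [] @ ys" "length ys = t" "set ys \<subseteq> X"
    using run_support[OF X assms(8)] by blast
  have cs: "cs \<noteq> []" using ys assms(6) by auto
  have sub: "set cs \<subseteq> X" using ys by simp
  have lt: "length cs = t" using ys by simp
  define M where "M = misses k P cs"
  define cv where "cv = card {j. j < k \<and> P j \<inter> set cs \<noteq> {}}"
  have c1: "cv + M = t" unfolding cv_def M_def using cov_misses[OF X oc sub] lt by simp
  have c2: "card (unc k P cs) + cv = k" unfolding cv_def by (rule unc_cov_card[OF X oc])
  have meq: "int (k + \<Delta> - t) - int (card (unc k P cs)) = int \<Delta> - int M"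
    using c1 c2 assms(7) by linarith
  have inv: "measure_pmf.expectation (kpp_run X (k + \<Delta> - t) cs) (\<lambda>ds. U (P i) (set ds))
     \<le> Fp (int (k + \<Delta> - t) - int (card (unc k P cs))) (Htilde k P cs) (U (P i) (set cs))"
    by (rule invariant[OF X oc i cs sub])
  have m2: "int \<Delta> - int M \<ge> 2" using assms(9) unfolding M_def .
  have fin: "Fp (int \<Delta> - int M) (Htilde k P cs) (U (P i) (set cs))
      \<le> Htilde k P cs / (exp 1 * (real_of_int (int \<Delta> - int M) - 1))"
    by (rule Fp_final[OF m2 U_nonneg[OF cs] Htilde_nonneg[OF cs]])
  have r: "real_of_int (int \<Delta> - int M) = real \<Delta> - real M" by simp
  show ?thesis using inv fin unfolding meq r M_def by simp
qed


end
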